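(* Let $X,Y$ be based spaces, $r\colon X\to Y$ and $l\colon Y\to X$ based maps, and $h\colon X\times[0,1]\to X$ a based homotopy from $\mathrm{id}_X$ to $l\circ r$. Then there are explicit mutually inverse homotopy equivalences $\chi\colon\mathrm{hofib}(r)\to\Omega\,\mathrm{hofib}(l)$ and $\chi^{-1}\colon\Omega\,\mathrm{hofib}(l)\to\mathrm{hofib}(r)$ (homotopy fibres over the basepoints).
   Context: Homotopy fibres use the path-space model: $\mathrm{hofib}(r)=\{(x,\gamma)\in X\times\mathrm{Map}([0,1],Y):\gamma(0)=r(x),\gamma(1)=*\}$, and $\Omega$ denotes based loops. *)

theory Defs
  imports "HOL-Analysis.Analysis"
begin

definition mapspace :: "'a topology \<Rightarrow> 'b topology \<Rightarrow> ('a \<Rightarrow> 'b) set" where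
  "mapspace S T = {f. continuous_map S T f \<and> f \<in> extensional (topspace S)}"

definition compact_open :: "'a topology \<Rightarrow> 'b topology \<Rightarrow> ('a \<Rightarrow> 'b) topology" where
  "compact_open S T =
     topology_generated_by
       {{f \<in> mapspace S T. f ` K \<subseteq> U} | K U. compactin S K \<and> openin T U}"

abbreviation unit_interval :: "real topology" where
  "unit_interval \<equiv> top_of_set {0..1}"

definition hofib :: "'a topology \<Rightarrow> 'b topology \<Rightarrow> 'b \<Rightarrow> ('a \<Rightarrow> 'b)
                     \<Rightarrow> ('a \<times> (real \<Rightarrow> 'b)) topology" where
  "hofib X Y y0 r =
     subtopology (prod_topology X (compact_open unit_interval Y))
       {(x, \<gamma>). \<gamma> 0 = r x \<and> \<gamma> 1 = y0}"

definition hofib_base :: "'a \<Rightarrow> 'b \<Rightarrow> 'a \<times> (real \<Rightarrow> 'b)" where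
  "hofib_base x0 y0 = (x0, restrict (\<lambda>t. y0) {0..1})"

definition loopspace :: "'c topology \<Rightarrow> 'c \<Rightarrow> (real \<Rightarrow> 'c) topology" where
  "loopspace Z z0 = subtopology (compact_open unit_interval Z) {\<gamma>. \<gamma> 0 = z0 \<and> \<gamma> 1 = z0}"

end

theory Submission
  imports Defs
begin

lemma topspace_compact_open [simp]:
  "topspace (compact_open S T) = mapspace S T"
proof -
  have "mapspace S T \<in> {{f \<in> mapspace S T. f ` K \<subseteq> U} | K U. compactin S K \<and> openin T U}"
    by (rule CollectI, rule exI[of _ "{}"], rule exI[of _ "topspace T"]) auto
  then show ?thesis unfolding compact_open_def topology_generated_by_topspace by blast
qed

lemma mapspaceD:
  assumes "f \<in> mapspace S T" shows "continuous_map S T f" "f \<in> extensional (topspace S)"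
  using assms by (auto simp: mapspace_def)

lemma openin_compact_open_basic:
  assumes "compactin S K" "openin T U"
  shows "openin (compact_open S T) {f \<in> mapspace S T. f ` K \<subseteq> U}"
  unfolding compact_open_def by (rule topology_generated_by_Basis) (use assms in blast)

lemma continuous_map_eval:
  "continuous_map (prod_topology (compact_open unit_interval T) unit_interval) T (\<lambda>(f,t). f t)"
  unfolding continuous_map
proof (intro conjI allI impI)
  show "(\<lambda>(f, t). f t) ` topspace (prod_topology (compact_open unit_interval T) unit_interval) \<subseteq> topspace T"
    by (auto simp: mapspace_def continuous_map_def)
next
  fix U assume U: "openin T U"
  let ?W = "{x \<in> topspace (prod_topology (compact_open unit_interval T) unit_interval). (case x of (f, t) \<Rightarrow> f t) \<in> U}"
  show "openin (prod_topology (compact_open unit_interval T) unit_interval) ?W"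
  proof (subst openin_subopen, intro ballI)
    fix p assume p: "p \<in> ?W"
    obtain f t where pft: "p = (f,t)" by (cases p)
    have f: "f \<in> mapspace unit_interval T" and t: "t \<in> {0..1}" and ftU: "f t \<in> U"
      using p pft by auto
    have cf: "continuous_map unit_interval T f" using f by (simp add: mapspace_def)
    have "openin unit_interval {s \<in> topspace unit_interval. f s \<in> U}"
      using cf U by (simp add: continuous_map)
    then have "openin (top_of_set {0..1}) {s \<in> {0..1}. f s \<in> U}" by simp
    then obtain e where e: "e > 0" "\<And>x'. x' \<in> {0..1} \<Longrightarrow> dist x' t < e \<Longrightarrow> x' \<in> {s \<in> {0..1}. f s \<in> U}"
      using t ftU unfolding openin_euclidean_subtopology_iff by blast
    define K where "K = {max 0 (t - e/2) .. min 1 (t + e/2)}"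
    have Kc: "compactin unit_interval K"
      by (auto simp: K_def compactin_subtopology compactin_euclidean_iff)
    define N where "N = {g \<in> mapspace unit_interval T. g ` K \<subseteq> U}"
    define M where "M = {0..1} \<inter> {t - e/2 <..< t + e/2}"
    have No: "openin (compact_open unit_interval T) N"
      unfolding N_def by (rule openin_compact_open_basic[OF Kc U])
    have Mo: "openin unit_interval M"
      unfolding M_def by (auto intro: openin_subtopology_Int2)
    show "\<exists>T'. openin (prod_topology (compact_open unit_interval T) unit_interval) T' \<and> p \<in> T' \<and> T' \<subseteq> ?W"
    proof (intro exI conjI)
      show "openin (prod_topology (compact_open unit_interval T) unit_interval) (N \<times> M)"
        using No Mo by (simp add: openin_prod_Times_iff)
      have "f ` K \<subseteq> U"
      proof
        fix y assume "y \<in> f ` K"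
        then obtain s where s: "s \<in> K" "y = f s" by blast
        have "s \<in> {0..1}" "dist s t < e" using s e(1) by (auto simp: K_def dist_real_def)
        then show "y \<in> U" using e(2) s by auto
      qed
      then show "p \<in> N \<times> M" using pft f t e(1) by (auto simp: N_def M_def)
      show "N \<times> M \<subseteq> ?W"
        using e(1) by (force simp: N_def M_def K_def)
    qed
  qed
qed

lemma continuous_map_eval_compose:
  assumes "continuous_map Z (compact_open unit_interval T) G" "continuous_map Z unit_interval p"
  shows "continuous_map Z T (\<lambda>z. G z (p z))"
proof -
  have "continuous_map Z T ((\<lambda>(f,t). f t) \<circ> (\<lambda>z. (G z, p z)))"
    by (rule continuous_map_compose[OF _ continuous_map_eval]) (simp add: assms continuous_map_pairwise o_def)
  then show ?thesis by (simp add: o_def)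
qed

lemma curry_mem:
  assumes F: "continuous_map (prod_topology Z unit_interval) T F" and z: "z \<in> topspace Z"
  shows "restrict (\<lambda>t. F (z,t)) {0..1} \<in> mapspace unit_interval T"
proof -
    have "continuous_map unit_interval T (F \<circ> (\<lambda>t. (z,t)))"
      by (rule continuous_map_compose[OF _ F]) (simp add: continuous_map_pairwise o_def z)
    then have "continuous_map unit_interval T (restrict (\<lambda>t. F (z,t)) {0..1})"
      by (rule continuous_map_eq) auto
    then show ?thesis by (simp add: mapspace_def)
qed

lemma continuous_map_curry:
  assumes F: "continuous_map (prod_topology Z unit_interval) T F"
  shows "continuous_map Z (compact_open unit_interval T) (\<lambda>z. restrict (\<lambda>t. F (z,t)) {0..1})"
  unfolding compact_open_def
proof (rule continuous_on_generated_topo)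

  have "mapspace unit_interval T \<in> {{f \<in> mapspace unit_interval T. f ` K \<subseteq> U} | K U. compactin unit_interval K \<and> openin T U}"
    by (rule CollectI, rule exI[of _ "{}"], rule exI[of _ "topspace T"]) auto
  then show "(\<lambda>z. restrict (\<lambda>t. F (z,t)) {0..1}) ` topspace Z \<subseteq> \<Union> {{f \<in> mapspace unit_interval T. f ` K \<subseteq> U} | K U. compactin unit_interval K \<and> openin T U}"
    using curry_mem[OF F] by blast
next
  fix V assume "V \<in> {{f \<in> mapspace unit_interval T. f ` K \<subseteq> U} | K U. compactin unit_interval K \<and> openin T U}"
  then obtain K U where V: "V = {f \<in> mapspace unit_interval T. f ` K \<subseteq> U}" and K: "compactin unit_interval K" and U: "openin T U"
    by blast
  have K01: "K \<subseteq> {0..1}" using K compactin_subset_topspace by fastforce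
  let ?S = "(\<lambda>z. restrict (\<lambda>t. F (z,t)) {0..1}) -` V \<inter> topspace Z"
  have S: "?S = {z \<in> topspace Z. \<forall>t\<in>K. F (z,t) \<in> U}"
    using curry_mem[OF F] K01 by (auto simp: V image_subset_iff subset_iff)
  have W: "openin (prod_topology Z unit_interval) {p \<in> topspace (prod_topology Z unit_interval). F p \<in> U}"
    using F U by (simp add: continuous_map)
  show "openin Z ?S" unfolding S
  proof (subst openin_subopen, intro ballI)
    fix z assume z: "z \<in> {z \<in> topspace Z. \<forall>t\<in>K. F (z,t) \<in> U}"
    have "{z} \<times> K \<subseteq> {p \<in> topspace (prod_topology Z unit_interval). F p \<in> U}"
      using z K01 by auto
    from tube_lemma_right[OF W K _ this] z obtain U' V' where
      UV: "openin Z U'" "openin unit_interval V'" "z \<in> U'" "K \<subseteq> V'"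
          "U' \<times> V' \<subseteq> {p \<in> topspace (prod_topology Z unit_interval). F p \<in> U}" by auto
    show "\<exists>T'. openin Z T' \<and> z \<in> T' \<and> T' \<subseteq> {z \<in> topspace Z. \<forall>t\<in>K. F (z,t) \<in> U}"
      using UV openin_subset[OF UV(1)] by (intro exI[of _ U']) blast
  qed
qed


definition clamp :: "real \<Rightarrow> real" where "clamp x = max 0 (min 1 x)"

lemma clamp_id [simp]: "x \<in> {0..1} \<Longrightarrow> clamp x = x"
  by (auto simp: clamp_def)
lemma clamp_01 [simp]: "clamp x \<in> {0..1}" "0 \<le> clamp x" "clamp x \<le> 1"
  by (auto simp: clamp_def)

lemma cm_sub: "continuous_map Z (subtopology X S) f \<Longrightarrow> continuous_map Z X f"
  by (simp add: continuous_map_in_subtopology)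
lemma cm_fst: "continuous_map Z (prod_topology X Y) f \<Longrightarrow> continuous_map Z X (\<lambda>x. fst (f x))"
  by (simp add: continuous_map_pairwise o_def)
lemma cm_snd: "continuous_map Z (prod_topology X Y) f \<Longrightarrow> continuous_map Z Y (\<lambda>x. snd (f x))"
  by (simp add: continuous_map_pairwise o_def)
lemma cm_id: "continuous_map Z Z (\<lambda>x. x)"
  by (rule continuous_map_id[unfolded id_def])
lemma cm_hofib: "continuous_map Z (hofib X Y y0 r) f \<Longrightarrow> continuous_map Z (prod_topology X (compact_open unit_interval Y)) f"
  unfolding hofib_def by (rule cm_sub)
lemma cm_loop: "continuous_map Z (loopspace W w0) f \<Longrightarrow> continuous_map Z (compact_open unit_interval W) f"
  unfolding loopspace_def by (rule cm_sub)
lemma cm_clamp: "continuous_map Z euclideanreal f \<Longrightarrow> continuous_map Z unit_interval (\<lambda>x. clamp (f x))"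
  unfolding clamp_def continuous_map_in_subtopology
  by (auto intro!: continuous_intros)
lemma cm_real_I: "continuous_map Z unit_interval f \<Longrightarrow> continuous_map Z euclideanreal f"
  by (rule cm_sub)

lemma topspace_hofib:
  "topspace (hofib X Y y0 r) = {(x,\<gamma>). x \<in> topspace X \<and> \<gamma> \<in> mapspace unit_interval Y \<and> \<gamma> 0 = r x \<and> \<gamma> 1 = y0}"
  by (auto simp: hofib_def)
lemma topspace_loopspace:
  "topspace (loopspace Z z0) = {\<gamma>. \<gamma> \<in> mapspace unit_interval Z \<and> \<gamma> 0 = z0 \<and> \<gamma> 1 = z0}"
  by (auto simp: loopspace_def)

lemma mapspace_in: "\<gamma> \<in> mapspace unit_interval Z \<Longrightarrow> t \<in> {0..1} \<Longrightarrow> \<gamma> t \<in> topspace Z"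
  by (auto simp: mapspace_def continuous_map_def)
lemma mapspace_ext: "\<gamma> \<in> mapspace unit_interval Z \<Longrightarrow> restrict \<gamma> {0..1} = \<gamma>"
  by (auto simp: mapspace_def extensional_def restrict_def)
lemma mapspace_ext': "\<gamma> \<in> mapspace unit_interval Z \<Longrightarrow> restrict (\<lambda>t. \<gamma> t) {0..1} = \<gamma>"
  using mapspace_ext by (simp add: restrict_def)

lemma cm_into_hofib:
  assumes "continuous_map Z X (\<lambda>z. fst (f z))" "continuous_map Z (compact_open unit_interval Y) (\<lambda>z. snd (f z))"
    "\<And>z. z \<in> topspace Z \<Longrightarrow> snd (f z) 0 = r (fst (f z)) \<and> snd (f z) 1 = y0"
  shows "continuous_map Z (hofib X Y y0 r) f"
  unfolding hofib_def continuous_map_in_subtopology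
proof
  have "continuous_map Z (prod_topology X (compact_open unit_interval Y)) (\<lambda>z. (fst (f z), snd (f z)))"
    using assms by (intro continuous_map_pairedI)
  then show "continuous_map Z (prod_topology X (compact_open unit_interval Y)) f" by simp
  show "f \<in> topspace Z \<rightarrow> {(x, \<gamma>). \<gamma> 0 = r x \<and> \<gamma> 1 = y0}" using assms(3)
    by (auto simp: case_prod_beta)
qed

lemma cm_into_loop:
  assumes "continuous_map Z (compact_open unit_interval W) f"
    "\<And>z. z \<in> topspace Z \<Longrightarrow> f z 0 = w0 \<and> f z 1 = w0"
  shows "continuous_map Z (loopspace W w0) f"
  unfolding loopspace_def continuous_map_in_subtopology using assms by auto


lemma cm_comp1: "continuous_map X W g \<Longrightarrow> continuous_map Z X a \<Longrightarrow> continuous_map Z W (\<lambda>z. g (a z))"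
  using continuous_map_compose[of Z X a W g] by (simp add: o_def)
lemma cm_comp2: "continuous_map (prod_topology X Y) W k \<Longrightarrow> continuous_map Z X a \<Longrightarrow> continuous_map Z Y b
   \<Longrightarrow> continuous_map Z W (\<lambda>z. k (a z, b z))"
  using continuous_map_compose[of Z "prod_topology X Y" "\<lambda>z. (a z, b z)" W k]
  by (simp add: o_def continuous_map_pairedI)
lemma cm_snd_real: "continuous_map (prod_topology Z (subtopology euclideanreal S)) euclideanreal snd"
  using continuous_map_snd cm_sub by blast
lemma cm_fst_real: "continuous_map (prod_topology (subtopology euclideanreal S) Z) euclideanreal fst"
  using continuous_map_fst cm_sub by blast

lemma p_ff: "continuous_map (prod_topology (prod_topology X Y) Z) X (\<lambda>z. fst (fst z))"
  using cm_fst[OF continuous_map_fst] .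
lemma p_sf: "continuous_map (prod_topology (prod_topology X Y) Z) Y (\<lambda>z. snd (fst z))"
  using cm_snd[OF continuous_map_fst] .
lemma p_ff_h: "continuous_map (prod_topology (hofib X Y y0 r) Z) X (\<lambda>z. fst (fst z))"
  using cm_fst[OF cm_hofib[OF continuous_map_fst]] .
lemma p_sf_h: "continuous_map (prod_topology (hofib X Y y0 r) Z) (compact_open unit_interval Y) (\<lambda>z. snd (fst z))"
  using cm_snd[OF cm_hofib[OF continuous_map_fst]] .
lemma p_sf_l: "continuous_map (prod_topology (prod_topology X (loopspace Y y0)) Z) (compact_open unit_interval Y) (\<lambda>z. snd (fst z))"
  using cm_loop[OF p_sf] .
lemma p_ff_r: "continuous_map (prod_topology (prod_topology (subtopology euclideanreal S) Y) Z) euclideanreal (\<lambda>z. fst (fst z))"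
  using cm_sub[OF p_ff] .

lemma p_fsf_h: "continuous_map (prod_topology (prod_topology W (hofib X Y y0 r)) Z) X (\<lambda>z. fst (snd (fst z)))"
  using cm_fst[OF cm_hofib[OF p_sf]] .
lemma p_ssf_h: "continuous_map (prod_topology (prod_topology W (hofib X Y y0 r)) Z) (compact_open unit_interval Y) (\<lambda>z. snd (snd (fst z)))"
  using cm_snd[OF cm_hofib[OF p_sf]] .
lemma p_fs_h: "continuous_map (prod_topology W (hofib X Y y0 r)) X (\<lambda>z. fst (snd z))"
  using cm_fst[OF cm_hofib[OF continuous_map_snd]] .
lemma p_f_r: "continuous_map (prod_topology (subtopology euclideanreal S) Y) euclideanreal (\<lambda>z. fst z)"
  by (rule cm_fst_real)

lemma clamp_0 [simp]: "clamp 0 = 0" and clamp_1 [simp]: "clamp 1 = 1"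
  by (auto simp: clamp_def)

lemmas rci = continuous_map_canonical_const continuous_map_real_mult continuous_map_add
  continuous_map_diff continuous_map_real_max continuous_map_real_min continuous_map_minus

theorem L1:
  fixes C :: "'c topology" and Q :: "'q topology" and g :: "'c \<Rightarrow> 'q" and k :: "'c \<times> real \<Rightarrow> 'c"
  assumes c0: "c0 \<in> topspace C" and q0: "q0 \<in> topspace Q"
    and g: "continuous_map C Q g" and gc0: "g c0 = q0"
    and k: "continuous_map (prod_topology C unit_interval) C k"
    and k0: "\<And>c. c \<in> topspace C \<Longrightarrow> k (c,0) = c"
    and k1: "\<And>c. c \<in> topspace C \<Longrightarrow> k (c,1) = c0"
    and kc0: "\<And>u. u \<in> {0..1} \<Longrightarrow> k (c0,u) = c0"
  shows "hofib C Q q0 g homotopy_equivalent_space loopspace Q q0"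
proof -
  let ?H = "hofib C Q q0 g" and ?L = "loopspace Q q0" and ?I = "unit_interval"
  define A where "A = (\<lambda>\<omega>::real\<Rightarrow>'q. (c0, \<omega>))"
  define BF where "BF = (\<lambda>z::('c \<times> (real\<Rightarrow>'q)) \<times> real.
     if snd z \<le> 1/2 then g (k (fst (fst z), clamp (1 - 2 * snd z))) else snd (fst z) (clamp (2 * snd z - 1)))"
  define B where "B = (\<lambda>p. restrict (\<lambda>t. BF (p,t)) {0..1})"
  have gc: "g c \<in> topspace Q" if "c \<in> topspace C" for c
    using g that by (auto simp: continuous_map_def)
  have contA: "continuous_map ?L ?H A"
    unfolding A_def
    by (rule cm_into_hofib) (auto simp: c0 gc0 topspace_loopspace intro: cm_loop cm_id)
  have contBF: "continuous_map (prod_topology ?H ?I) Q BF"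
    unfolding BF_def
  proof (rule continuous_map_cases_le)
    show "continuous_map (prod_topology ?H ?I) euclideanreal snd" by (rule cm_snd_real)
    show "continuous_map (prod_topology ?H ?I) euclideanreal (\<lambda>x. 1/2)" by simp
    show "continuous_map (subtopology (prod_topology ?H ?I) {x \<in> topspace (prod_topology ?H ?I). snd x \<le> 1 / 2}) Q
       (\<lambda>z. g (k (fst (fst z), clamp (1 - 2 * snd z))))"
      by (intro continuous_map_from_subtopology cm_comp1[OF g] cm_comp2[OF k] cm_clamp p_ff_h
          rci cm_snd_real; simp)
    show "continuous_map (subtopology (prod_topology ?H ?I) {x \<in> topspace (prod_topology ?H ?I). 1 / 2 \<le> snd x}) Q
       (\<lambda>z. snd (fst z) (clamp (2 * snd z - 1)))"
      by (intro continuous_map_from_subtopology continuous_map_eval_compose[where G="\<lambda>z. snd (fst z)"] p_sf_h cm_clamp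
          rci cm_snd_real; simp)
    fix z assume z: "z \<in> topspace (prod_topology ?H ?I)" "snd z = 1/2"
    then have e: "1 - 2 * snd z = 0" "2 * snd z - 1 = 0" by simp_all
    show "g (k (fst (fst z), clamp (1 - 2 * snd z))) = snd (fst z) (clamp (2 * snd z - 1))"
      unfolding e using z(1) by (auto simp: topspace_hofib k0)
  qed
  have contB: "continuous_map ?H ?L B"
    unfolding B_def
  proof (rule cm_into_loop)
    show "continuous_map ?H (compact_open ?I Q) (\<lambda>p. restrict (\<lambda>t. BF (p, t)) {0..1})"
      by (rule continuous_map_curry[OF contBF])
    fix z assume "z \<in> topspace ?H"
    then show "restrict (\<lambda>t. BF (z, t)) {0..1} 0 = q0 \<and> restrict (\<lambda>t. BF (z, t)) {0..1} 1 = q0"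
      by (auto simp: BF_def topspace_hofib k1 gc0)
  qed
  define HF1 where "HF1 = (\<lambda>z::(real \<times> (real\<Rightarrow>'q)) \<times> real.
       snd (fst z) (clamp ((1 - fst (fst z)) * max 0 (2 * snd z - 1) + fst (fst z) * snd z)))"
  have contHF1: "continuous_map (prod_topology (prod_topology ?I ?L) ?I) Q HF1"
    unfolding HF1_def
    by (intro continuous_map_eval_compose[where G="\<lambda>z. snd (fst z)"] p_sf_l cm_clamp rci
          cm_snd_real p_ff_r; simp)
  have hom1: "homotopic_with (\<lambda>x. True) ?L ?L (B \<circ> A) id"
  proof (subst homotopic_with, simp, intro exI conjI ballI)
    show "continuous_map (prod_topology ?I ?L) ?L (\<lambda>z. restrict (\<lambda>t. HF1 (z,t)) {0..1})"
    proof (rule cm_into_loop)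
      show "continuous_map (prod_topology ?I ?L) (compact_open ?I Q) (\<lambda>z. restrict (\<lambda>t. HF1 (z,t)) {0..1})"
        by (rule continuous_map_curry[OF contHF1])
      fix z assume z: "z \<in> topspace (prod_topology ?I ?L)"
      obtain u \<omega> where zu: "z = (u,\<omega>)" by (cases z)
      have e: "(1 - u) * max 0 (2 * 0 - 1) + u * 0 = 0" "(1 - u) * max 0 (2 * 1 - 1) + u * 1 = 1" by simp_all
      show "restrict (\<lambda>t. HF1 (z,t)) {0..1} 0 = q0 \<and> restrict (\<lambda>t. HF1 (z,t)) {0..1} 1 = q0"
        using z unfolding zu HF1_def by (simp only: fst_conv snd_conv e restrict_apply') (simp add: topspace_loopspace)
    qed
    fix \<omega> assume w: "\<omega> \<in> topspace ?L"
    show "restrict (\<lambda>t. HF1 ((0,\<omega>),t)) {0..1} = (B \<circ> A) \<omega>"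
      unfolding o_def B_def A_def
    proof (rule restrict_ext)
      fix t :: real assume t: "t \<in> {0..1}"
      show "HF1 ((0, \<omega>), t) = BF ((c0, \<omega>), t)"
      proof (cases "t \<le> 1/2")
        case True
        then have "max 0 (2 * t - 1) = 0" by simp
        then show ?thesis using True w by (simp add: HF1_def BF_def kc0 gc0 topspace_loopspace)
      next
        case False
        then have "max 0 (2 * t - 1) = 2 * t - 1" by simp
        then show ?thesis using False w by (simp add: HF1_def BF_def)
      qed
    qed
    show "restrict (\<lambda>t. HF1 ((1,\<omega>),t)) {0..1} = id \<omega>"
    proof -
      have "restrict (\<lambda>t. HF1 ((1,\<omega>),t)) {0..1} = restrict (\<lambda>t. \<omega> t) {0..1}"
        by (rule restrict_ext) (simp add: HF1_def)
      also have "\<dots> = \<omega>" using w by (auto simp: topspace_loopspace intro: mapspace_ext)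
      finally show ?thesis by simp
    qed
  qed simp
  define HF2 where "HF2 = (\<lambda>z::(real \<times> ('c \<times> (real\<Rightarrow>'q))) \<times> real.
       if snd z \<le> (1 - fst (fst z)) / 2 then g (k (fst (snd (fst z)), clamp ((1 - fst (fst z)) - 2 * snd z)))
       else snd (snd (fst z)) (clamp ((snd z - (1 - fst (fst z)) / 2) / (1 - (1 - fst (fst z)) / 2))))"
  have contHF2: "continuous_map (prod_topology (prod_topology ?I ?H) ?I) Q HF2"
    unfolding HF2_def
  proof (rule continuous_map_cases_le)
    show "continuous_map (prod_topology (prod_topology ?I ?H) ?I) euclideanreal snd" by (rule cm_snd_real)
    show "continuous_map (prod_topology (prod_topology ?I ?H) ?I) euclideanreal (\<lambda>x. (1 - fst (fst x)) / 2)"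
      by (intro rci continuous_map_real_divide p_ff_r; simp)
    show "continuous_map (subtopology (prod_topology (prod_topology ?I ?H) ?I) {x \<in> topspace (prod_topology (prod_topology ?I ?H) ?I). snd x \<le> (1 - fst (fst x)) / 2}) Q
       (\<lambda>z. g (k (fst (snd (fst z)), clamp ((1 - fst (fst z)) - 2 * snd z))))"
      by (intro continuous_map_from_subtopology cm_comp1[OF g] cm_comp2[OF k] cm_clamp p_fsf_h
          rci cm_snd_real p_ff_r; simp)
    show "continuous_map (subtopology (prod_topology (prod_topology ?I ?H) ?I) {x \<in> topspace (prod_topology (prod_topology ?I ?H) ?I). (1 - fst (fst x)) / 2 \<le> snd x}) Q
       (\<lambda>z. snd (snd (fst z)) (clamp ((snd z - (1 - fst (fst z)) / 2) / (1 - (1 - fst (fst z)) / 2))))"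
      by (intro continuous_map_from_subtopology continuous_map_eval_compose[where G="\<lambda>z. snd (snd (fst z))"] p_ssf_h cm_clamp
          rci continuous_map_real_divide cm_snd_real p_ff_r; auto)
    fix z assume z: "z \<in> topspace (prod_topology (prod_topology ?I ?H) ?I)" "snd z = (1 - fst (fst z)) / 2"
    then have e: "(1 - fst (fst z)) - 2 * snd z = 0" "snd z - (1 - fst (fst z)) / 2 = 0" by simp_all
    show "g (k (fst (snd (fst z)), clamp ((1 - fst (fst z)) - 2 * snd z))) =
       snd (snd (fst z)) (clamp ((snd z - (1 - fst (fst z)) / 2) / (1 - (1 - fst (fst z)) / 2)))"
      unfolding e using z(1) by (auto simp: topspace_hofib k0)
  qed
  define hh where "hh = (\<lambda>z::real \<times> ('c \<times> (real\<Rightarrow>'q)). (k (fst (snd z), clamp (1 - fst z)), restrict (\<lambda>t. HF2 (z,t)) {0..1}))"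
  have hom2: "homotopic_with (\<lambda>x. True) ?H ?H (A \<circ> B) id"
  proof (subst homotopic_with, simp, intro exI conjI ballI)
    show "continuous_map (prod_topology ?I ?H) ?H hh"
      unfolding hh_def
    proof (rule cm_into_hofib)
      show "continuous_map (prod_topology ?I ?H) C (\<lambda>z. fst (k (fst (snd z), clamp (1 - fst z)), restrict (\<lambda>t. HF2 (z, t)) {0..1}))"
        unfolding fst_conv by (intro cm_comp2[OF k] p_fs_h cm_clamp rci p_f_r)
      show "continuous_map (prod_topology ?I ?H) (compact_open ?I Q) (\<lambda>z. snd (k (fst (snd z), clamp (1 - fst z)), restrict (\<lambda>t. HF2 (z, t)) {0..1}))"
        unfolding snd_conv by (rule continuous_map_curry[OF contHF2])
      fix z assume z: "z \<in> topspace (prod_topology ?I ?H)"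
      obtain u c \<omega> where zu: "z = (u,(c,\<omega>))" by (cases z) auto
      have u: "u \<in> {0..1}" and cw: "c \<in> topspace C" "\<omega> \<in> mapspace ?I Q" "\<omega> 0 = g c" "\<omega> 1 = q0"
        using z by (auto simp: zu topspace_hofib)
      have d: "1 - (1 - u) / 2 \<noteq> 0" using u by simp
      have e1: "(1 - (1 - u) / 2) / (1 - (1 - u) / 2) = 1" using d by simp
      have e2: "\<not> 1 \<le> (1 - u) / 2" using u by simp
      show "snd (k (fst (snd z), clamp (1 - fst z)), restrict (\<lambda>t. HF2 (z, t)) {0..1}) 0 =
          g (fst (k (fst (snd z), clamp (1 - fst z)), restrict (\<lambda>t. HF2 (z, t)) {0..1})) \<and>
          snd (k (fst (snd z), clamp (1 - fst z)), restrict (\<lambda>t. HF2 (z, t)) {0..1}) 1 = q0"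
        using u cw e1 e2 by (simp add: zu HF2_def)
    qed
    fix p assume p: "p \<in> topspace ?H"
    obtain c \<omega> where pc: "p = (c,\<omega>)" by (cases p)
    have cw: "c \<in> topspace C" "\<omega> \<in> mapspace ?I Q" "\<omega> 0 = g c" "\<omega> 1 = q0"
      using p by (auto simp: pc topspace_hofib)
    show "hh (0, p) = (A \<circ> B) p"
      unfolding o_def A_def B_def hh_def pc
    proof (simp add: k1 cw, rule restrict_ext)
      fix t :: real assume t: "t \<in> {0..1}"
      have "(t - 1 / 2) / (1 - 1 / 2) = 2 * t - 1" by (simp add: field_simps)
      then show "HF2 ((0, c, \<omega>), t) = BF ((c, \<omega>), t)"
        by (simp add: HF2_def BF_def) (simp add: mult.commute)
    qed
    show "hh (1, p) = id p"
      unfolding hh_def pc id_def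
    proof (simp add: k0 cw)
      have "restrict (\<lambda>t. HF2 ((1, c, \<omega>), t)) {0..1} = restrict (\<lambda>t. \<omega> t) {0..1}"
      proof (rule restrict_ext)
        fix t :: real assume t: "t \<in> {0..1}"
        show "HF2 ((1, c, \<omega>), t) = \<omega> t"
          using t cw by (cases "t = 0") (auto simp: HF2_def k0)
      qed
      also have "\<dots> = \<omega>" using cw(2) by (rule mapspace_ext')
      finally show "restrict (\<lambda>t. HF2 ((1, c, \<omega>), t)) {0..1} = \<omega>" .
    qed
  qed simp
  show ?thesis
    unfolding homotopy_equivalent_space_def
    using contA contB hom1 hom2 by blast
qed


definition psit :: "real \<Rightarrow> real \<Rightarrow> real" where "psit t s = t + (1 - t) * max 0 (1 - 2 * s) / 3"
definition psis :: "real \<Rightarrow> real \<Rightarrow> real" where "psis t s = max 0 ((2 * s - 1 + t) / max 1 (1 + t))"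
definition rM :: "real \<Rightarrow> real \<Rightarrow> real" where "rM t s = max (1/2) (max ((t+1)/2) (2 * \<bar>s - 1/2\<bar>))"
definition rut :: "real \<Rightarrow> real \<Rightarrow> real" where "rut t s = -1 + (t+1) / rM t s"
definition rus :: "real \<Rightarrow> real \<Rightarrow> real" where "rus t s = 1/2 + (s - 1/2) / rM t s"
definition pht :: "real \<Rightarrow> real \<Rightarrow> real" where "pht t s = (1-s) * max 0 ((3 * t-1)/2) + s * t"
definition phs :: "real \<Rightarrow> real \<Rightarrow> real" where "phs t s = (1-s) * max 0 ((1-3 * t)/2) + s"
definition qt :: "real \<Rightarrow> real \<Rightarrow> real" where "qt t s = rut (psit t s) (psis t s)"
definition qs :: "real \<Rightarrow> real \<Rightarrow> real" where "qs t s = rus (psit t s) (psis t s)"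
definition rpt :: "real \<Rightarrow> real \<Rightarrow> real" where "rpt t s = pht (qt t s) (qs t s)"
definition rps :: "real \<Rightarrow> real \<Rightarrow> real" where "rps t s = phs (qt t s) (qs t s)"

lemma psi_sq:
  assumes "0 \<le> t" "t \<le> 1" "0 \<le> s" "s \<le> 1"
  shows "0 \<le> psit t s \<and> psit t s \<le> 1 \<and> 0 \<le> psis t s \<and> psis t s \<le> 1"
proof -
  have mx: "0 \<le> max 0 (1 - 2 * s)" "max 0 (1 - 2 * s) \<le> 1" using assms by auto
  have a: "0 \<le> (1 - t) * max 0 (1 - 2 * s)" "(1 - t) * max 0 (1 - 2 * s) \<le> 1"
    using assms mx by (auto intro: mult_le_one)
  have a2: "(1 - t) * max 0 (1 - 2 * s) \<le> 1 - t" using assms mx by (auto intro: mult_left_le)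
  have m: "max 1 (1 + t) = 1 + t" using assms by simp
  have b: "(2 * s - 1 + t) / (1 + t) \<le> 1" using assms by (simp add: divide_le_eq)
  show ?thesis using a a2 b assms unfolding psit_def psis_def m by auto
qed

lemma rM_pos: "0 \<le> t \<Longrightarrow> rM t s = max ((t+1)/2) (2 * \<bar>s - 1/2\<bar>) \<and> rM t s > 0"
  unfolding rM_def max_def by (auto simp: abs_if)

lemma ru_U:
  assumes "0 \<le> t" "t \<le> 1" "0 \<le> s" "s \<le> 1"
  shows "0 \<le> rut t s \<and> rut t s \<le> 1 \<and> 0 \<le> rus t s \<and> rus t s \<le> 1 \<and> (rus t s = 0 \<or> rus t s = 1 \<or> rut t s = 1)"
proof -
  let ?M = "rM t s"
  have M: "?M = max ((t+1)/2) (2 * \<bar>s - 1/2\<bar>)" "?M > 0" using rM_pos[OF assms(1), of s] by auto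
  have M1: "(t+1)/2 \<le> ?M" "2 * \<bar>s - 1/2\<bar> \<le> ?M" "?M \<le> t + 1" using M assms by (auto simp: abs_if)
  have r1: "1 \<le> (t+1)/?M" using M1 M(2) by (simp add: le_divide_eq)
  have r2: "(t+1)/?M \<le> 2" using M1 M(2) by (simp add: divide_le_eq)
  have r3: "\<bar>s - 1/2\<bar> / ?M \<le> 1/2" using M1 M(2) by (simp add: divide_le_eq)
  have r4: "(s - 1/2) / ?M \<le> 1/2" "-(1/2) \<le> (s - 1/2) / ?M"
  proof -
    have "(s - 1/2) / ?M \<le> \<bar>s - 1/2\<bar> / ?M" using M(2) by (simp add: divide_right_mono)
    then show "(s - 1/2) / ?M \<le> 1/2" using r3 by linarith
    have "(-\<bar>s - 1/2\<bar>) / ?M \<le> (s - 1/2) / ?M" using M(2) by (intro divide_right_mono) auto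
    then have "-(\<bar>s - 1/2\<bar> / ?M) \<le> (s - 1/2) / ?M" by simp
    then show "-(1/2) \<le> (s - 1/2) / ?M" using r3 by linarith
  qed
  have cases: "?M = (t+1)/2 \<or> ?M = 2 * \<bar>s - 1/2\<bar>" using M(1) by linarith
  have c: "rus t s = 0 \<or> rus t s = 1 \<or> rut t s = 1"
  proof (rule disjE[OF cases])
    assume e1: "?M = (t+1)/2"
    have "t + 1 \<noteq> 0" using assms by simp
    then have "(t+1)/?M = 2" unfolding e1 by (simp add: field_simps)
    then show ?thesis unfolding rut_def by linarith
  next
    assume e: "?M = 2 * \<bar>s - 1/2\<bar>"
    show ?thesis
    proof (cases "s \<ge> 1/2")
      case True
      then have e2: "?M = 2 * (s - 1/2)" using e by simp
      then have "s - 1/2 \<noteq> 0" using M(2) by auto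
      then have "(s - 1/2)/?M = 1/2" unfolding e2 by simp
      then show ?thesis unfolding rus_def by linarith
    next
      case False
      then have e2: "?M = -2 * (s - 1/2)" using e by simp
      then have "s - 1/2 \<noteq> 0" using M(2) by auto
      then have "(s - 1/2)/?M = -1/2" unfolding e2 by (simp add: field_simps)
      then show ?thesis unfolding rus_def by linarith
    qed
  qed
  have "rut t s = -1 + (t+1)/?M" "rus t s = 1/2 + (s - 1/2)/?M" by (simp_all add: rut_def rus_def)
  then show ?thesis using r1 r2 r4 c by linarith
qed

lemma ru_id:
  assumes "0 \<le> t" "t \<le> 1" "0 \<le> s" "s \<le> 1" "s = 0 \<or> s = 1 \<or> t = 1"
  shows "rut t s = t \<and> rus t s = s"
proof -
  have "rM t s = 1" using assms unfolding rM_def max_def by (auto simp: abs_if)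
  then show ?thesis by (simp add: rut_def rus_def)
qed

lemma ph_cases:
  shows "b = 0 \<Longrightarrow> a \<le> 1/3 \<Longrightarrow> pht a b = 0 \<and> phs a b = (1 - 3 * a)/2"
    and "b = 0 \<Longrightarrow> a \<ge> 1/3 \<Longrightarrow> pht a b = (3 * a - 1)/2 \<and> phs a b = 0"
    and "b = 1 \<Longrightarrow> pht a b = a \<and> phs a b = 1"
    and "a = 1 \<Longrightarrow> pht a b = 1 \<and> phs a b = b"
  by (auto simp: pht_def phs_def max_def algebra_simps)

lemma psi_K:
  shows "0 \<le> t \<Longrightarrow> t \<le> 1 \<Longrightarrow> psit t 0 = (2 * t + 1)/3 \<and> psis t 0 = 0"
    and "0 \<le> t \<Longrightarrow> psit t 1 = t \<and> psis t 1 = 1"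
    and "0 \<le> s \<Longrightarrow> psit 1 s = 1 \<and> psis 1 s = s"
    and "s \<le> 1/2 \<Longrightarrow> psit 0 s = (1 - 2 * s)/3 \<and> psis 0 s = 0"
proof -
  assume "0 \<le> t" "t \<le> 1"
  then show "psit t 0 = (2 * t + 1)/3 \<and> psis t 0 = 0"
    by (auto simp: psit_def psis_def max_def field_simps divide_le_0_iff)
next
  assume t: "0 \<le> t"
  then have "(2 * 1 - 1 + t) / max 1 (1 + t) = 1" by (simp add: max_def)
  then show "psit t 1 = t \<and> psis t 1 = 1" by (simp add: psit_def psis_def)
next
  assume "0 \<le> s"
  then show "psit 1 s = 1 \<and> psis 1 s = s" by (simp add: psit_def psis_def)
next
  assume "s \<le> 1/2"
  then show "psit 0 s = (1 - 2 * s)/3 \<and> psis 0 s = 0" by (simp add: psit_def psis_def max_def)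
qed

lemma rp_fix:
  assumes "0 \<le> t" "t \<le> 1" "0 \<le> s" "s \<le> 1" "s = 0 \<or> s = 1 \<or> t = 1 \<or> (t = 0 \<and> s \<le> 1/2)"
  shows "rpt t s = t \<and> rps t s = s"
proof -
  consider "s = 0" | "s = 1" | "t = 1" | "t = 0 \<and> s \<le> 1/2" using assms(5) by blast
  then show ?thesis
  proof cases
    case 1
    have p: "psit t s = (2 * t + 1)/3" "psis t s = 0" using psi_K(1)[OF assms(1,2)] 1 by auto
    have r: "rut ((2 * t + 1)/3) 0 = (2 * t + 1)/3 \<and> rus ((2 * t + 1)/3) 0 = 0"
      using assms(1,2) by (intro ru_id) auto
    have q: "qt t s = (2 * t + 1)/3" "qs t s = 0" unfolding qt_def qs_def p using r by auto
    have e: "(3 * ((2 * t + 1)/3) - 1)/2 = t" by (simp add: field_simps)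
    have "pht ((2 * t + 1)/3) 0 = t \<and> phs ((2 * t + 1)/3) 0 = 0"
      using ph_cases(2)[where b=0 and a="(2 * t + 1)/3"] assms(1) unfolding e by auto
    then show ?thesis unfolding rpt_def rps_def q using 1 by auto
  next
    case 2
    have p: "psit t s = t" "psis t s = 1" using psi_K(2)[OF assms(1)] 2 by auto
    have q: "qt t s = t" "qs t s = 1" unfolding qt_def qs_def p using assms ru_id[of t 1] by auto
    show ?thesis unfolding rpt_def rps_def q using ph_cases(3)[of 1 t] 2 by auto
  next
    case 3
    have p: "psit t s = 1" "psis t s = s" using psi_K(3)[OF assms(3)] 3 by auto
    have q: "qt t s = 1" "qs t s = s" unfolding qt_def qs_def p using assms ru_id[of 1 s] by auto
    show ?thesis unfolding rpt_def rps_def q using ph_cases(4)[of 1 s] 3 by auto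
  next
    case 4
    have p: "psit t s = (1 - 2 * s)/3" "psis t s = 0" using psi_K(4)[of s] 4 by auto
    have r: "rut ((1 - 2 * s)/3) 0 = (1 - 2 * s)/3 \<and> rus ((1 - 2 * s)/3) 0 = 0"
      using assms(3) 4 by (intro ru_id) auto
    have q: "qt t s = (1 - 2 * s)/3" "qs t s = 0" unfolding qt_def qs_def p using r by auto
    have e: "(1 - 3 * ((1 - 2 * s)/3))/2 = s" by (simp add: field_simps)
    have "pht ((1 - 2 * s)/3) 0 = 0 \<and> phs ((1 - 2 * s)/3) 0 = s"
      using ph_cases(1)[where b=0 and a="(1 - 2 * s)/3"] assms(3) unfolding e by auto
    then show ?thesis unfolding rpt_def rps_def q using 4 by auto
  qed
qed

lemma q_U:
  assumes "0 \<le> t" "t \<le> 1" "0 \<le> s" "s \<le> 1"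
  shows "0 \<le> qt t s \<and> qt t s \<le> 1 \<and> 0 \<le> qs t s \<and> qs t s \<le> 1 \<and> (qs t s = 0 \<or> qs t s = 1 \<or> qt t s = 1)"
  unfolding qt_def qs_def using psi_sq[OF assms] ru_U by blast

lemma rp_sq:
  assumes "0 \<le> t" "t \<le> 1" "0 \<le> s" "s \<le> 1"
  shows "0 \<le> rpt t s \<and> rpt t s \<le> 1 \<and> 0 \<le> rps t s \<and> rps t s \<le> 1"
proof -
  have q: "0 \<le> qt t s" "qt t s \<le> 1" "0 \<le> qs t s" "qs t s \<le> 1" "qs t s = 0 \<or> qs t s = 1 \<or> qt t s = 1"
    using q_U[OF assms] by auto
  show ?thesis unfolding rpt_def rps_def
    using q ph_cases[where a="qt t s" and b="qs t s"] by (cases "qt t s \<le> 1/3") auto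
qed


lemma cm_psit: "continuous_map Z euclideanreal a \<Longrightarrow> continuous_map Z euclideanreal b \<Longrightarrow>
   continuous_map Z euclideanreal (\<lambda>z. psit (a z) (b z))"
  unfolding psit_def by (intro rci continuous_map_real_divide; simp)
lemma cm_psis: "continuous_map Z euclideanreal a \<Longrightarrow> continuous_map Z euclideanreal b \<Longrightarrow>
   continuous_map Z euclideanreal (\<lambda>z. psis (a z) (b z))"
  unfolding psis_def by (intro rci continuous_map_real_divide; simp)
lemma cm_rM: "continuous_map Z euclideanreal a \<Longrightarrow> continuous_map Z euclideanreal b \<Longrightarrow>
   continuous_map Z euclideanreal (\<lambda>z. rM (a z) (b z))"
  unfolding rM_def by (intro rci continuous_map_real_divide continuous_map_real_abs; simp)
lemma rM_ne: "rM a b \<noteq> 0" unfolding rM_def by (auto simp: max_def)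
lemma cm_rut: "continuous_map Z euclideanreal a \<Longrightarrow> continuous_map Z euclideanreal b \<Longrightarrow>
   continuous_map Z euclideanreal (\<lambda>z. rut (a z) (b z))"
  unfolding rut_def by (intro rci continuous_map_real_divide cm_rM; simp add: rM_ne)
lemma cm_rus: "continuous_map Z euclideanreal a \<Longrightarrow> continuous_map Z euclideanreal b \<Longrightarrow>
   continuous_map Z euclideanreal (\<lambda>z. rus (a z) (b z))"
  unfolding rus_def by (intro rci continuous_map_real_divide cm_rM; simp add: rM_ne)
lemma cm_pht: "continuous_map Z euclideanreal a \<Longrightarrow> continuous_map Z euclideanreal b \<Longrightarrow>
   continuous_map Z euclideanreal (\<lambda>z. pht (a z) (b z))"
  unfolding pht_def by (intro rci continuous_map_real_divide; simp)
lemma cm_phs: "continuous_map Z euclideanreal a \<Longrightarrow> continuous_map Z euclideanreal b \<Longrightarrow>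
   continuous_map Z euclideanreal (\<lambda>z. phs (a z) (b z))"
  unfolding phs_def by (intro rci continuous_map_real_divide; simp)
lemma cm_qt: "continuous_map Z euclideanreal a \<Longrightarrow> continuous_map Z euclideanreal b \<Longrightarrow>
   continuous_map Z euclideanreal (\<lambda>z. qt (a z) (b z))"
  unfolding qt_def by (intro cm_rut cm_psit cm_psis)
lemma cm_qs: "continuous_map Z euclideanreal a \<Longrightarrow> continuous_map Z euclideanreal b \<Longrightarrow>
   continuous_map Z euclideanreal (\<lambda>z. qs (a z) (b z))"
  unfolding qs_def by (intro cm_rus cm_psit cm_psis)
lemma cm_rpt: "continuous_map Z euclideanreal a \<Longrightarrow> continuous_map Z euclideanreal b \<Longrightarrow>
   continuous_map Z euclideanreal (\<lambda>z. rpt (a z) (b z))"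
  unfolding rpt_def by (intro cm_pht cm_qt cm_qs)
lemma cm_rps: "continuous_map Z euclideanreal a \<Longrightarrow> continuous_map Z euclideanreal b \<Longrightarrow>
   continuous_map Z euclideanreal (\<lambda>z. rps (a z) (b z))"
  unfolding rps_def by (intro cm_phs cm_qt cm_qs)

lemma const_path_mem: "x \<in> topspace X \<Longrightarrow> restrict (\<lambda>t. x) {0..1} \<in> mapspace unit_interval X"
  unfolding mapspace_def by (auto intro: continuous_map_eq[of _ _ "\<lambda>t. x"])

lemma p_sff_h: "continuous_map (prod_topology (prod_topology (hofib X Y y0 r) W) Z) (compact_open unit_interval Y) (\<lambda>z. snd (fst (fst z)))"
  using cm_snd[OF cm_hofib[OF p_ff]] .
lemma p_sf_r: "continuous_map (prod_topology (prod_topology W (subtopology euclideanreal S)) Z) euclideanreal (\<lambda>z. snd (fst z))"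
  using cm_sub[OF p_sf] .
lemma p_f_h: "continuous_map (prod_topology (hofib X Y y0 r) Z) X (\<lambda>z. fst (fst z))"
  by (rule p_ff_h)

lemma q_K:
  shows "0 \<le> t \<Longrightarrow> t \<le> 1 \<Longrightarrow> qt t 0 = (2 * t + 1)/3 \<and> qs t 0 = 0"
    and "0 \<le> t \<Longrightarrow> t \<le> 1 \<Longrightarrow> qt t 1 = t \<and> qs t 1 = 1"
    and "0 \<le> s \<Longrightarrow> s \<le> 1 \<Longrightarrow> qt 1 s = 1 \<and> qs 1 s = s"
    and "0 \<le> s \<Longrightarrow> s \<le> 1/2 \<Longrightarrow> qt 0 s = (1 - 2 * s)/3 \<and> qs 0 s = 0"
proof -
  assume t: "0 \<le> t" "t \<le> 1"
  have r: "rut ((2 * t + 1)/3) 0 = (2 * t + 1)/3 \<and> rus ((2 * t + 1)/3) 0 = 0"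
    using t by (intro ru_id) auto
  have p1: "psit t 0 = (2 * t + 1)/3" and p2: "psis t 0 = 0" using psi_K(1)[OF t] by auto
  show "qt t 0 = (2 * t + 1)/3 \<and> qs t 0 = 0" unfolding qt_def qs_def p1 p2 by (rule r)
  have "rut t 1 = t \<and> rus t 1 = 1" using t by (intro ru_id) auto
  then show "qt t 1 = t \<and> qs t 1 = 1" using psi_K(2)[OF t(1)] by (simp add: qt_def qs_def)
next
  assume s: "0 \<le> s" "s \<le> 1"
  have "rut 1 s = 1 \<and> rus 1 s = s" using s by (intro ru_id) auto
  then show "qt 1 s = 1 \<and> qs 1 s = s" using psi_K(3)[OF s(1)] by (simp add: qt_def qs_def)
next
  assume s: "0 \<le> s" "s \<le> 1/2"
  have r: "rut ((1 - 2 * s)/3) 0 = (1 - 2 * s)/3 \<and> rus ((1 - 2 * s)/3) 0 = 0"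
    using s by (intro ru_id) auto
  have p1: "psit 0 s = (1 - 2 * s)/3" and p2: "psis 0 s = 0" using psi_K(4)[OF s(2)] by auto
  show "qt 0 s = (1 - 2 * s)/3 \<and> qs 0 s = 0" unfolding qt_def qs_def p1 p2 by (rule r)
qed

lemma hf_fst_of: "continuous_map Z (hofib X Y y0 r) f \<Longrightarrow> continuous_map Z X (\<lambda>z. fst (f z))"
  by (rule cm_fst[OF cm_hofib])
lemma hf_snd_of: "continuous_map Z (hofib X Y y0 r) f \<Longrightarrow> continuous_map Z (compact_open unit_interval Y) (\<lambda>z. snd (f z))"
  by (rule cm_snd[OF cm_hofib])

context
  fixes X :: "'a topology" and Y :: "'b topology"
    and x0 :: 'a and y0 :: 'b
    and r :: "'a \<Rightarrow> 'b" and l :: "'b \<Rightarrow> 'a"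
    and h :: "'a \<times> real \<Rightarrow> 'a"
  assumes x0: "x0 \<in> topspace X" and y0: "y0 \<in> topspace Y"
    and r: "continuous_map X Y r" and rx0: "r x0 = y0"
    and l: "continuous_map Y X l" and ly0: "l y0 = x0"
    and h: "continuous_map (prod_topology X unit_interval) X h"
    and h0: "\<And>x. x \<in> topspace X \<Longrightarrow> h (x, 0) = x"
    and h1: "\<And>x. x \<in> topspace X \<Longrightarrow> h (x, 1) = l (r x)"
    and hx0: "\<And>t. t \<in> {0..1} \<Longrightarrow> h (x0, t) = x0"
begin

definition "kk p = (snd (fst p) (snd p), restrict (\<lambda>s. snd (fst p) (clamp (snd p + (1 - snd p) * s))) {0..1})"
definition "gg c = (r (fst c), restrict (\<lambda>s. if s \<le> 1/2 then h (fst c, clamp (1 - 2 * s)) else snd c (clamp (2 * s - 1))) {0..1})"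

lemma hx: "x \<in> topspace X \<Longrightarrow> t \<in> {0..1} \<Longrightarrow> h (x,t) \<in> topspace X"
  using h by (auto simp: continuous_map_def)

lemma gg_cont: "continuous_map (hofib X X x0 (\<lambda>x. x)) (hofib Y X x0 l) gg"
  unfolding gg_def
proof (rule cm_into_hofib)
  show "continuous_map (hofib X X x0 (\<lambda>x. x)) Y (\<lambda>z. fst (r (fst z), restrict (\<lambda>s. if s \<le> 1/2 then h (fst z, clamp (1 - 2 * s)) else snd z (clamp (2 * s - 1))) {0..1}))"
    unfolding fst_conv by (rule cm_comp1[OF r]) (rule cm_fst[OF cm_hofib[OF cm_id]])
  have F: "continuous_map (prod_topology (hofib X X x0 (\<lambda>x. x)) unit_interval) X
     (\<lambda>z. if snd z \<le> 1/2 then h (fst (fst z), clamp (1 - 2 * snd z)) else snd (fst z) (clamp (2 * snd z - 1)))"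
  proof (rule continuous_map_cases_le)
    show "continuous_map (prod_topology (hofib X X x0 (\<lambda>x. x)) unit_interval) euclideanreal snd" by (rule cm_snd_real)
    show "continuous_map (prod_topology (hofib X X x0 (\<lambda>x. x)) unit_interval) euclideanreal (\<lambda>x. 1/2)" by simp
    show "continuous_map (subtopology (prod_topology (hofib X X x0 (\<lambda>x. x)) unit_interval) {x \<in> topspace (prod_topology (hofib X X x0 (\<lambda>x. x)) unit_interval). snd x \<le> 1 / 2}) X
      (\<lambda>z. h (fst (fst z), clamp (1 - 2 * snd z)))"
      by (intro continuous_map_from_subtopology cm_comp2[OF h] p_ff_h cm_clamp rci cm_snd_real; simp)
    show "continuous_map (subtopology (prod_topology (hofib X X x0 (\<lambda>x. x)) unit_interval) {x \<in> topspace (prod_topology (hofib X X x0 (\<lambda>x. x)) unit_interval). 1 / 2 \<le> snd x}) X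
      (\<lambda>z. snd (fst z) (clamp (2 * snd z - 1)))"
      by (intro continuous_map_from_subtopology continuous_map_eval_compose[where G="\<lambda>z. snd (fst z)"] p_sf_h cm_clamp
          rci cm_snd_real; simp)
    fix z assume z: "z \<in> topspace (prod_topology (hofib X X x0 (\<lambda>x. x)) unit_interval)" "snd z = 1/2"
    then have e: "1 - 2 * snd z = 0" "2 * snd z - 1 = 0" by simp_all
    show "h (fst (fst z), clamp (1 - 2 * snd z)) = snd (fst z) (clamp (2 * snd z - 1))"
      unfolding e using z(1) by (auto simp: topspace_hofib h0)
  qed
  show "continuous_map (hofib X X x0 (\<lambda>x. x)) (compact_open unit_interval X) (\<lambda>z. snd (r (fst z), restrict (\<lambda>s. if s \<le> 1/2 then h (fst z, clamp (1 - 2 * s)) else snd z (clamp (2 * s - 1))) {0..1}))"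
    unfolding snd_conv using continuous_map_curry[OF F, unfolded fst_conv snd_conv] .
  fix z assume "z \<in> topspace (hofib X X x0 (\<lambda>x. x))"
  then show "snd (r (fst z), restrict (\<lambda>s. if s \<le> 1/2 then h (fst z, clamp (1 - 2 * s)) else snd z (clamp (2 * s - 1))) {0..1}) 0 =
         l (fst (r (fst z), restrict (\<lambda>s. if s \<le> 1/2 then h (fst z, clamp (1 - 2 * s)) else snd z (clamp (2 * s - 1))) {0..1})) \<and>
         snd (r (fst z), restrict (\<lambda>s. if s \<le> 1/2 then h (fst z, clamp (1 - 2 * s)) else snd z (clamp (2 * s - 1))) {0..1}) 1 = x0"
    by (auto simp: topspace_hofib h1)
qed

lemma kk_cont: "continuous_map (prod_topology (hofib X X x0 (\<lambda>x. x)) unit_interval) (hofib X X x0 (\<lambda>x. x)) kk"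
  unfolding kk_def
proof (rule cm_into_hofib)
  show "continuous_map (prod_topology (hofib X X x0 (\<lambda>x. x)) unit_interval) X
     (\<lambda>z. fst (snd (fst z) (snd z), restrict (\<lambda>s. snd (fst z) (clamp (snd z + (1 - snd z) * s))) {0..1}))"
    unfolding fst_conv by (intro continuous_map_eval_compose[where G="\<lambda>z. snd (fst z)"] p_sf_h continuous_map_snd)
  have F: "continuous_map (prod_topology (prod_topology (hofib X X x0 (\<lambda>x. x)) unit_interval) unit_interval) X
     (\<lambda>z. snd (fst (fst z)) (clamp (snd (fst z) + (1 - snd (fst z)) * snd z)))"
    by (intro continuous_map_eval_compose[where G="\<lambda>z. snd (fst (fst z))"] p_sff_h cm_clamp rci p_sf_r cm_snd_real)
  show "continuous_map (prod_topology (hofib X X x0 (\<lambda>x. x)) unit_interval) (compact_open unit_interval X)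
     (\<lambda>z. snd (snd (fst z) (snd z), restrict (\<lambda>s. snd (fst z) (clamp (snd z + (1 - snd z) * s))) {0..1}))"
    unfolding snd_conv using continuous_map_curry[OF F, unfolded fst_conv snd_conv] .
  fix z assume "z \<in> topspace (prod_topology (hofib X X x0 (\<lambda>x. x)) unit_interval)"
  then show "snd (snd (fst z) (snd z), restrict (\<lambda>s. snd (fst z) (clamp (snd z + (1 - snd z) * s))) {0..1}) 0 =
          fst (snd (fst z) (snd z), restrict (\<lambda>s. snd (fst z) (clamp (snd z + (1 - snd z) * s))) {0..1}) \<and>
          snd (snd (fst z) (snd z), restrict (\<lambda>s. snd (fst z) (clamp (snd z + (1 - snd z) * s))) {0..1}) 1 = x0"
    by (auto simp: topspace_hofib)
qed

lemma part1: "hofib (hofib X X x0 (\<lambda>x. x)) (hofib Y X x0 l) (hofib_base y0 x0) gg homotopy_equivalent_space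
    loopspace (hofib Y X x0 l) (hofib_base y0 x0)"
proof -
  have a1: "hofib_base x0 x0 \<in> topspace (hofib X X x0 (\<lambda>x. x))"
    using x0 const_path_mem[OF x0] by (simp add: hofib_base_def topspace_hofib)
  have a2: "hofib_base y0 x0 \<in> topspace (hofib Y X x0 l)"
    using y0 const_path_mem[OF x0] by (simp add: hofib_base_def topspace_hofib ly0)
  have a4: "gg (hofib_base x0 x0) = hofib_base y0 x0"
    by (auto simp: gg_def hofib_base_def rx0 hx0 intro!: restrict_ext)
  have a67: "kk (c, 0) = c \<and> kk (c, 1) = hofib_base x0 x0" if c: "c \<in> topspace (hofib X X x0 (\<lambda>x. x))" for c
  proof -
    obtain x \<delta> where cx: "c = (x,\<delta>)" by (cases c)
    have d: "\<delta> \<in> mapspace unit_interval X" "\<delta> 0 = x" "\<delta> 1 = x0" using c by (auto simp: cx topspace_hofib)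
    have e: "restrict (\<lambda>s. \<delta> (clamp s)) {0..1} = \<delta>"
      by (subst mapspace_ext'[OF d(1), symmetric]) (rule restrict_ext, simp)
    show ?thesis
      using d e by (simp add: kk_def cx hofib_base_def)
  qed
  have a8: "kk (hofib_base x0 x0, u) = hofib_base x0 x0" if "u \<in> {0..1}" for u
    using that by (auto simp: kk_def hofib_base_def intro!: restrict_ext)
  show ?thesis
    by (rule L1[OF a1 a2 gg_cont a4 kk_cont]) (use a67 a8 in auto)
qed


definition "bb x y v = (if v \<le> 1/3 then h (x, clamp (3 * v)) else l (y (clamp ((3 * v - 1)/2))))"
definition "Es z t s = bb (fst z) (snd z) (min 1 (qt t s + 2 * qs t s))"
definition "EE u p t s = snd (snd p (clamp (u * t + (1 - u) * rpt t s))) (clamp (u * s + (1 - u) * rps t s))"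

lemma cm_bb:
  assumes a: "continuous_map Z X a" and b: "continuous_map Z (compact_open unit_interval Y) b"
    and v: "continuous_map Z euclideanreal v"
    and ab: "\<And>z. z \<in> topspace Z \<Longrightarrow> b z 0 = r (a z)"
  shows "continuous_map Z X (\<lambda>z. bb (a z) (b z) (v z))"
  unfolding bb_def
proof (rule continuous_map_cases_le[OF v])
  show "continuous_map Z euclideanreal (\<lambda>x. 1/3)" by simp
  show "continuous_map (subtopology Z {x \<in> topspace Z. v x \<le> 1/3}) X (\<lambda>z. h (a z, clamp (3 * v z)))"
    by (intro continuous_map_from_subtopology cm_comp2[OF h] a cm_clamp rci v)
  show "continuous_map (subtopology Z {x \<in> topspace Z. 1/3 \<le> v x}) X (\<lambda>z. l (b z (clamp ((3 * v z - 1) / 2))))"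
    by (intro continuous_map_from_subtopology cm_comp1[OF l] continuous_map_eval_compose[where G=b] b cm_clamp
        rci continuous_map_real_divide v; simp)
  fix z assume z: "z \<in> topspace Z" "v z = 1/3"
  then have e: "3 * v z = 1" "(3 * v z - 1) / 2 = 0" by simp_all
  have az: "a z \<in> topspace X" using a z(1) by (auto simp: continuous_map_def)
  show "h (a z, clamp (3 * v z)) = l (b z (clamp ((3 * v z - 1) / 2)))"
    unfolding e using ab[OF z(1)] az by (simp add: h1)
qed

lemma cm_Es:
  assumes z: "continuous_map Z (hofib X Y y0 r) f" and t: "continuous_map Z euclideanreal t"
    and s: "continuous_map Z euclideanreal s"
  shows "continuous_map Z X (\<lambda>w. Es (f w) (t w) (s w))"
  unfolding Es_def
proof (rule cm_bb)
  show "continuous_map Z X (\<lambda>w. fst (f w))" by (rule hf_fst_of[OF z])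
  show "continuous_map Z (compact_open unit_interval Y) (\<lambda>w. snd (f w))" by (rule hf_snd_of[OF z])
  show "continuous_map Z euclideanreal (\<lambda>w. min 1 (qt (t w) (s w) + 2 * qs (t w) (s w)))"
    by (intro rci cm_qt cm_qs t s)
  fix w assume "w \<in> topspace Z"
  then have "f w \<in> topspace (hofib X Y y0 r)" using z by (auto simp: continuous_map_def)
  then show "snd (f w) 0 = r (fst (f w))" by (auto simp: topspace_hofib)
qed

lemma cm_EE:
  assumes p: "continuous_map Z (hofib (hofib X X x0 (\<lambda>x. x)) (hofib Y X x0 l) (hofib_base y0 x0) gg) p"
    and u: "continuous_map Z euclideanreal u" and t: "continuous_map Z euclideanreal t"
    and s: "continuous_map Z euclideanreal s"
  shows "continuous_map Z X (\<lambda>w. EE (u w) (p w) (t w) (s w))"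
proof -
  have pG: "continuous_map Z (compact_open unit_interval (hofib Y X x0 l)) (\<lambda>w. snd (p w))"
    by (rule hf_snd_of[OF p])
  have c1: "continuous_map Z unit_interval (\<lambda>w. clamp (u w * t w + (1 - u w) * rpt (t w) (s w)))"
    by (intro cm_clamp rci cm_rpt u t s)
  have c2: "continuous_map Z unit_interval (\<lambda>w. clamp (u w * s w + (1 - u w) * rps (t w) (s w)))"
    by (intro cm_clamp rci cm_rps u t s)
  have e1: "continuous_map Z (hofib Y X x0 l) (\<lambda>w. snd (p w) (clamp (u w * t w + (1 - u w) * rpt (t w) (s w))))"
    by (rule continuous_map_eval_compose[OF pG c1])
  have e2: "continuous_map Z (compact_open unit_interval X) (\<lambda>w. snd (snd (p w) (clamp (u w * t w + (1 - u w) * rpt (t w) (s w)))))"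
    by (rule hf_snd_of[OF e1])
  show ?thesis unfolding EE_def by (rule continuous_map_eval_compose[OF e2 c2])
qed


abbreviation "CC \<equiv> hofib X X x0 (\<lambda>x. x)"
abbreviation "PP \<equiv> hofib Y X x0 l"
abbreviation "GG \<equiv> hofib CC PP (hofib_base y0 x0) gg"
abbreviation "RR \<equiv> hofib X Y y0 r"

lemma GG_facts:
  assumes p: "((x,\<delta>),\<Omega>) \<in> topspace GG"
  shows "x \<in> topspace X" "\<delta> \<in> mapspace unit_interval X" "\<delta> 0 = x" "\<delta> 1 = x0"
    "\<Omega> \<in> mapspace unit_interval PP"
    "\<And>t. t \<in> {0..1} \<Longrightarrow> \<Omega> t \<in> topspace PP"
    "\<And>t. t \<in> {0..1} \<Longrightarrow> fst (\<Omega> t) \<in> topspace Y"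
    "\<And>t. t \<in> {0..1} \<Longrightarrow> snd (\<Omega> t) \<in> mapspace unit_interval X"
    "\<And>t. t \<in> {0..1} \<Longrightarrow> snd (\<Omega> t) 0 = l (fst (\<Omega> t))"
    "\<And>t. t \<in> {0..1} \<Longrightarrow> snd (\<Omega> t) 1 = x0"
    "\<And>s. s \<in> {0..1} \<Longrightarrow> snd (\<Omega> 1) s = x0" "fst (\<Omega> 1) = y0"
    "\<And>s. 0 \<le> s \<Longrightarrow> s \<le> 1/2 \<Longrightarrow> snd (\<Omega> 0) s = h (x, 1 - 2 * s)" "fst (\<Omega> 0) = r x"
    "\<And>\<tau>. \<tau> \<in> {0..1} \<Longrightarrow> snd (\<Omega> 0) ((1 + \<tau>)/2) = \<delta> \<tau>"
proof -
  have A: "x \<in> topspace X" "\<delta> \<in> mapspace unit_interval X" "\<delta> 0 = x" "\<delta> 1 = x0"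
    "\<Omega> \<in> mapspace unit_interval PP" "\<Omega> 0 = gg (x,\<delta>)" "\<Omega> 1 = hofib_base y0 x0"
    using p by (auto simp: topspace_hofib)
  show "x \<in> topspace X" "\<delta> \<in> mapspace unit_interval X" "\<delta> 0 = x" "\<delta> 1 = x0" "\<Omega> \<in> mapspace unit_interval PP"
    using A by auto
  show T: "\<And>t. t \<in> {0..1} \<Longrightarrow> \<Omega> t \<in> topspace PP" using A(5) mapspace_in by blast
  show "\<And>t. t \<in> {0..1} \<Longrightarrow> fst (\<Omega> t) \<in> topspace Y"
    "\<And>t. t \<in> {0..1} \<Longrightarrow> snd (\<Omega> t) \<in> mapspace unit_interval X"
    "\<And>t. t \<in> {0..1} \<Longrightarrow> snd (\<Omega> t) 0 = l (fst (\<Omega> t))"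
    "\<And>t. t \<in> {0..1} \<Longrightarrow> snd (\<Omega> t) 1 = x0"
    using T by (auto simp: topspace_hofib case_prod_unfold)
  show "\<And>s. s \<in> {0..1} \<Longrightarrow> snd (\<Omega> 1) s = x0" "fst (\<Omega> 1) = y0"
    using A(7) by (auto simp: hofib_base_def)
  show "\<And>s. 0 \<le> s \<Longrightarrow> s \<le> 1/2 \<Longrightarrow> snd (\<Omega> 0) s = h (x, 1 - 2 * s)" "fst (\<Omega> 0) = r x"
    using A(6) by (auto simp: gg_def)
  show "\<And>\<tau>. \<tau> \<in> {0..1} \<Longrightarrow> snd (\<Omega> 0) ((1 + \<tau>)/2) = \<delta> \<tau>"
  proof -
    fix \<tau> :: real assume tau: "\<tau> \<in> {0..1}"
    show "snd (\<Omega> 0) ((1 + \<tau>)/2) = \<delta> \<tau>"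
    proof (cases "\<tau> = 0")
      case True
      then show ?thesis using A by (simp add: gg_def h0)
    next
      case False
      then have "\<not> (1 + \<tau>)/2 \<le> 1/2" using tau by auto
      moreover have "2 * ((1 + \<tau>) / 2) - 1 = \<tau>" by (simp add: field_simps)
      ultimately show ?thesis using A tau by (simp add: gg_def)
    qed
  qed
qed

lemma Es_K:
  assumes z: "z \<in> topspace RR"
  shows "\<And>t. t \<in> {0..1} \<Longrightarrow> Es z t 0 = l (snd z t)"
    and "\<And>t. t \<in> {0..1} \<Longrightarrow> Es z t 1 = x0"
    and "\<And>s. s \<in> {0..1} \<Longrightarrow> Es z 1 s = x0"
    and "\<And>s. 0 \<le> s \<Longrightarrow> s \<le> 1/2 \<Longrightarrow> Es z 0 s = h (fst z, 1 - 2 * s)"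
proof -
  obtain x y where zx: "z = (x,y)" by (cases z)
  have A: "x \<in> topspace X" "y \<in> mapspace unit_interval Y" "y 0 = r x" "y 1 = y0" using z by (auto simp: zx topspace_hofib)
  have bb1: "bb x y 1 = x0" using A by (simp add: bb_def ly0)
  fix t :: real assume t: "t \<in> {0..1}"
  show "Es z t 0 = l (snd z t)"
  proof (cases "t = 0")
    case True
    have q: "qt t 0 = 1/3" "qs t 0 = 0" using q_K(1)[of 0] True by auto
    show ?thesis using A True unfolding Es_def zx q by (simp add: bb_def h1)
  next
    case False
    then have a1: "\<not> (2 * t + 1) / 3 \<le> 1/3" "min 1 ((2 * t + 1) / 3 + 2 * 0) = (2 * t + 1) / 3"
      using t by auto
    have a2: "(3 * ((2 * t + 1) / 3) - 1) / 2 = t" by (simp add: field_simps)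
    have q: "qt t 0 = (2 * t + 1)/3" "qs t 0 = 0" using q_K(1)[of t] t by auto
    show ?thesis unfolding Es_def zx q fst_conv snd_conv a1(2) bb_def using a1(1) a2 t by simp
  qed
  show "Es z t 1 = x0" using q_K(2)[of t] t bb1 by (simp add: Es_def zx)
next
  obtain x y where zx: "z = (x,y)" by (cases z)
  have A: "x \<in> topspace X" "y \<in> mapspace unit_interval Y" "y 0 = r x" "y 1 = y0" using z by (auto simp: zx topspace_hofib)
  have bb1: "bb x y 1 = x0" using A by (simp add: bb_def ly0)
  fix s :: real assume s: "s \<in> {0..1}"
  show "Es z 1 s = x0" using q_K(3)[of s] s bb1 by (simp add: Es_def zx)
next
  obtain x y where zx: "z = (x,y)" by (cases z)
  fix s :: real assume s: "0 \<le> s" "s \<le> 1/2"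
  have q: "qt 0 s = (1 - 2 * s)/3" "qs 0 s = 0" using q_K(4)[OF s] by auto
  have m: "min 1 ((1 - 2 * s)/3 + 2 * 0) = (1 - 2 * s)/3" using s by auto
  have c: "(1 - 2 * s)/3 \<le> 1/3" using s by auto
  have e: "3 * ((1 - 2 * s)/3) = 1 - 2 * s" by simp
  have cl: "clamp (1 - 2 * s) = 1 - 2 * s" using s by simp
  show "Es z 0 s = h (fst z, 1 - 2 * s)" unfolding Es_def zx q fst_conv snd_conv m bb_def e cl
    by (simp only: if_P[OF c])
qed


definition "prj p = (fst (fst p), restrict (\<lambda>t. fst (snd p t)) {0..1})"

lemma bb_1: "y \<in> mapspace unit_interval Y \<Longrightarrow> y 1 = y0 \<Longrightarrow> bb x y 1 = x0"
  by (simp add: bb_def ly0)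

lemma key:
  assumes p: "((x,\<delta>),\<Omega>) \<in> topspace GG" and t: "t \<in> {0..1}" and s: "s \<in> {0..1}"
  shows "snd (\<Omega> (rpt t s)) (rps t s) = Es (prj ((x,\<delta>),\<Omega>)) t s"
proof -
  note F = GG_facts[OF p]
  define a where "a = qt t s"
  define b where "b = qs t s"
  have U: "0 \<le> a" "a \<le> 1" "0 \<le> b" "b \<le> 1" "b = 0 \<or> b = 1 \<or> a = 1"
    using q_U[of t s] t s unfolding a_def b_def by auto
  have R: "rpt t s = pht a b" "rps t s = phs a b" by (simp_all add: rpt_def rps_def a_def b_def)
  define y where "y = restrict (\<lambda>t. fst (\<Omega> t)) {0..1}"
  have ES: "Es (prj ((x,\<delta>),\<Omega>)) t s = bb x y (min 1 (a + 2 * b))"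
    by (simp add: Es_def prj_def y_def a_def b_def)
  have y1: "y 1 = y0" using F(12) by (simp add: y_def)
  have ym: "y \<in> mapspace unit_interval Y"
  proof -
    have "restrict (\<lambda>t. fst (\<Omega> t)) {0..1} \<in> mapspace unit_interval Y"
    proof -
      have "continuous_map unit_interval PP \<Omega>" using F(5) by (simp add: mapspace_def)
      then have "continuous_map unit_interval Y (\<lambda>t. fst (\<Omega> t))" by (rule hf_fst_of)
      then show ?thesis unfolding mapspace_def by (auto intro: continuous_map_eq)
    qed
    then show ?thesis by (simp add: y_def)
  qed
  consider "b = 0" "a \<le> 1/3" | "b = 0" "\<not> a \<le> 1/3" | "b = 1" | "a = 1" using U(5) by blast
  then show ?thesis
  proof cases
    case 1
    have ph: "pht a b = 0" "phs a b = (1 - 3 * a)/2" using ph_cases(1)[OF 1] by auto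
    have e: "1 - 2 * ((1 - 3 * a) / 2) = 3 * a" by (simp add: field_simps)
    have "snd (\<Omega> 0) ((1 - 3 * a)/2) = h (x, 1 - 2 * ((1 - 3 * a) / 2))"
      using 1 U by (intro F(13)) auto
    also have "\<dots> = h (x, 3 * a)" unfolding e ..
    finally have L: "snd (\<Omega> 0) ((1 - 3 * a)/2) = h (x, 3 * a)" .
    have m: "min 1 (a + 2 * b) = a" using 1 U by auto
    have c: "clamp (3 * a) = 3 * a" using 1 U by simp
    show ?thesis unfolding ES R ph m L using 1 by (simp add: bb_def c)
  next
    case 2
    have ph: "pht a b = (3 * a - 1)/2" "phs a b = 0" using ph_cases(2)[of b a] 2 by auto
    have T: "(3 * a - 1)/2 \<in> {0..1}" using 2 U by auto
    have m: "min 1 (a + 2 * b) = a" using 2 U by auto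
    have "bb x y a = l (y ((3 * a - 1)/2))" using 2 T by (simp add: bb_def)
    also have "\<dots> = l (fst (\<Omega> ((3 * a - 1)/2)))" using T by (simp add: y_def)
    finally show ?thesis unfolding ES R ph m using F(9)[OF T] by simp
  next
    case 3
    have ph: "pht a b = a" "phs a b = 1" using ph_cases(3)[OF 3] by auto
    have m: "min 1 (a + 2 * b) = 1" using 3 U by auto
    show ?thesis unfolding ES R ph m using F(10)[of a] U bb_1[OF ym y1] by simp
  next
    case 4
    have ph: "pht a b = 1" "phs a b = b" using ph_cases(4)[OF 4] by auto
    have m: "min 1 (a + 2 * b) = 1" using 4 U by auto
    show ?thesis unfolding ES R ph m using F(11)[of b] U bb_1[OF ym y1] by simp
  qed
qed


definition "sig z = ((fst z, restrict (\<lambda>\<tau>. Es z 0 ((1 + \<tau>)/2)) {0..1}),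
   restrict (\<lambda>t. (snd z t, restrict (\<lambda>s. Es z t s) {0..1})) {0..1})"
definition "hm w = ((fst (fst (snd w)), restrict (\<lambda>\<tau>. EE (fst w) (snd w) 0 ((1 + \<tau>)/2)) {0..1}),
   restrict (\<lambda>t. (fst (snd (snd w) t), restrict (\<lambda>s. EE (fst w) (snd w) t s) {0..1})) {0..1})"

lemma EE_K:
  assumes "u \<in> {0..1}" "t \<in> {0..1}" "s \<in> {0..1}" "s = 0 \<or> s = 1 \<or> t = 1 \<or> (t = 0 \<and> s \<le> 1/2)"
  shows "EE u p t s = snd (snd p t) s"
proof -
  have "rpt t s = t \<and> rps t s = s" using assms by (intro rp_fix) auto
  then have "u * t + (1 - u) * rpt t s = t" "u * s + (1 - u) * rps t s = s" by (simp_all add: algebra_simps)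
  then show ?thesis using assms by (simp add: EE_def)
qed

lemma EE1: "t \<in> {0..1} \<Longrightarrow> s \<in> {0..1} \<Longrightarrow> EE 1 p t s = snd (snd p t) s"
  by (simp add: EE_def)

lemma EE0: "t \<in> {0..1} \<Longrightarrow> s \<in> {0..1} \<Longrightarrow> EE 0 p t s = snd (snd p (rpt t s)) (rps t s)"
  using rp_sq[of t s] by (simp add: EE_def)

lemma prj_cont: "continuous_map GG RR prj"
  unfolding prj_def
proof (rule cm_into_hofib)
  show "continuous_map GG X (\<lambda>z. fst (fst (fst z), restrict (\<lambda>t. fst (snd z t)) {0..1}))"
    unfolding fst_conv by (rule hf_fst_of[OF hf_fst_of[OF cm_id]])
  have F: "continuous_map (prod_topology GG unit_interval) Y (\<lambda>w. fst (snd (fst w) (snd w)))"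
    by (rule hf_fst_of[OF continuous_map_eval_compose[OF p_sf_h continuous_map_snd]])
  show "continuous_map GG (compact_open unit_interval Y) (\<lambda>z. snd (fst (fst z), restrict (\<lambda>t. fst (snd z t)) {0..1}))"
    unfolding snd_conv using continuous_map_curry[OF F, unfolded fst_conv snd_conv] .
  fix z assume z: "z \<in> topspace GG"
  obtain x \<delta> \<Omega> where zx: "z = ((x,\<delta>),\<Omega>)" by (metis prod.exhaust)
  note F = GG_facts[OF z[unfolded zx]]
  show "snd (fst (fst z), restrict (\<lambda>t. fst (snd z t)) {0..1}) 0 = r (fst (fst (fst z), restrict (\<lambda>t. fst (snd z t)) {0..1})) \<and>
        snd (fst (fst z), restrict (\<lambda>t. fst (snd z t)) {0..1}) 1 = y0"
    using F(12,14) by (simp add: zx)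
qed

lemma sig_cont: "continuous_map RR GG sig"
  unfolding sig_def
proof (rule cm_into_hofib)
  show "continuous_map RR CC (\<lambda>z. fst ((fst z, restrict (\<lambda>\<tau>. Es z 0 ((1 + \<tau>)/2)) {0..1}),
     restrict (\<lambda>t. (snd z t, restrict (\<lambda>s. Es z t s) {0..1})) {0..1}))"
    unfolding fst_conv
  proof (rule cm_into_hofib)
    show "continuous_map RR X (\<lambda>z. fst (fst z, restrict (\<lambda>\<tau>. Es z 0 ((1 + \<tau>)/2)) {0..1}))"
      unfolding fst_conv by (rule hf_fst_of[OF cm_id])
    have F: "continuous_map (prod_topology RR unit_interval) X (\<lambda>w. Es (fst w) 0 ((1 + snd w)/2))"
      by (intro cm_Es continuous_map_fst rci continuous_map_real_divide cm_snd_real; simp)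
    show "continuous_map RR (compact_open unit_interval X) (\<lambda>z. snd (fst z, restrict (\<lambda>\<tau>. Es z 0 ((1 + \<tau>)/2)) {0..1}))"
      unfolding snd_conv using continuous_map_curry[OF F, unfolded fst_conv snd_conv] .
    fix z assume z: "z \<in> topspace RR"
    have "Es z 0 (1/2) = fst z" using Es_K(4)[OF z, of "1/2"] z by (auto simp: h0 topspace_hofib)
    moreover have "Es z 0 1 = x0" using Es_K(2)[OF z, of 0] by simp
    ultimately show "snd (fst z, restrict (\<lambda>\<tau>. Es z 0 ((1 + \<tau>)/2)) {0..1}) 0 = fst (fst z, restrict (\<lambda>\<tau>. Es z 0 ((1 + \<tau>)/2)) {0..1}) \<and>
       snd (fst z, restrict (\<lambda>\<tau>. Es z 0 ((1 + \<tau>)/2)) {0..1}) 1 = x0" by simp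
  qed
  have F: "continuous_map (prod_topology RR unit_interval) PP
     (\<lambda>w. (snd (fst w) (snd w), restrict (\<lambda>s. Es (fst w) (snd w) s) {0..1}))"
  proof (rule cm_into_hofib)
    show "continuous_map (prod_topology RR unit_interval) Y (\<lambda>w. fst (snd (fst w) (snd w), restrict (\<lambda>s. Es (fst w) (snd w) s) {0..1}))"
      unfolding fst_conv by (rule continuous_map_eval_compose[OF p_sf_h continuous_map_snd])
    have F2: "continuous_map (prod_topology (prod_topology RR unit_interval) unit_interval) X
        (\<lambda>v. Es (fst (fst v)) (snd (fst v)) (snd v))"
      by (intro cm_Es p_ff p_sf_r cm_snd_real)
    show "continuous_map (prod_topology RR unit_interval) (compact_open unit_interval X)
        (\<lambda>w. snd (snd (fst w) (snd w), restrict (\<lambda>s. Es (fst w) (snd w) s) {0..1}))"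
      unfolding snd_conv using continuous_map_curry[OF F2, unfolded fst_conv snd_conv] .
    fix w assume w: "w \<in> topspace (prod_topology RR unit_interval)"
    then have w1: "fst w \<in> topspace RR" "snd w \<in> {0..1}" by auto
    show "snd (snd (fst w) (snd w), restrict (\<lambda>s. Es (fst w) (snd w) s) {0..1}) 0 =
        l (fst (snd (fst w) (snd w), restrict (\<lambda>s. Es (fst w) (snd w) s) {0..1})) \<and>
        snd (snd (fst w) (snd w), restrict (\<lambda>s. Es (fst w) (snd w) s) {0..1}) 1 = x0"
      using Es_K(1,2)[OF w1(1) w1(2)] by simp
  qed
  show "continuous_map RR (compact_open unit_interval PP) (\<lambda>z. snd ((fst z, restrict (\<lambda>\<tau>. Es z 0 ((1 + \<tau>)/2)) {0..1}),
     restrict (\<lambda>t. (snd z t, restrict (\<lambda>s. Es z t s) {0..1})) {0..1}))"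
    unfolding snd_conv using continuous_map_curry[OF F, unfolded fst_conv snd_conv] .
  fix z assume z: "z \<in> topspace RR"
  obtain x y where zx: "z = (x,y)" by (cases z)
  have A: "x \<in> topspace X" "y \<in> mapspace unit_interval Y" "y 0 = r x" "y 1 = y0" using z by (auto simp: zx topspace_hofib)
  have e0: "restrict (\<lambda>s. Es z 0 s) {0..1} = snd (gg (x, restrict (\<lambda>\<tau>. Es z 0 ((1 + \<tau>)/2)) {0..1}))"
    unfolding gg_def snd_conv fst_conv
  proof (rule restrict_ext)
    fix s :: real assume s: "s \<in> {0..1}"
    show "Es z 0 s = (if s \<le> 1/2 then h (x, clamp (1 - 2 * s)) else restrict (\<lambda>\<tau>. Es z 0 ((1 + \<tau>)/2)) {0..1} (clamp (2 * s - 1)))"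
    proof (cases "s \<le> 1/2")
      case True
      then show ?thesis using Es_K(4)[OF z, of s] s by (simp add: zx)
    next
      case False
      then have "2 * s - 1 \<in> {0..1}" "(1 + (2 * s - 1))/2 = s" using s by auto
      then show ?thesis using False by simp
    qed
  qed
  have e1: "restrict (\<lambda>s. Es z 1 s) {0..1} = restrict (\<lambda>s. x0) {0..1}"
    by (rule restrict_ext) (simp add: Es_K(3)[OF z])
  show "snd ((fst z, restrict (\<lambda>\<tau>. Es z 0 ((1 + \<tau>)/2)) {0..1}), restrict (\<lambda>t. (snd z t, restrict (\<lambda>s. Es z t s) {0..1})) {0..1}) 0 =
     gg (fst ((fst z, restrict (\<lambda>\<tau>. Es z 0 ((1 + \<tau>)/2)) {0..1}), restrict (\<lambda>t. (snd z t, restrict (\<lambda>s. Es z t s) {0..1})) {0..1})) \<and>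
     snd ((fst z, restrict (\<lambda>\<tau>. Es z 0 ((1 + \<tau>)/2)) {0..1}), restrict (\<lambda>t. (snd z t, restrict (\<lambda>s. Es z t s) {0..1})) {0..1}) 1 =
     hofib_base y0 x0"
  proof
    have "gg (x, restrict (\<lambda>\<tau>. Es z 0 ((1 + \<tau>)/2)) {0..1}) = (r x, snd (gg (x, restrict (\<lambda>\<tau>. Es z 0 ((1 + \<tau>)/2)) {0..1})))"
      by (simp add: gg_def)
    then show "snd ((fst z, restrict (\<lambda>\<tau>. Es z 0 ((1 + \<tau>)/2)) {0..1}), restrict (\<lambda>t. (snd z t, restrict (\<lambda>s. Es z t s) {0..1})) {0..1}) 0 =
     gg (fst ((fst z, restrict (\<lambda>\<tau>. Es z 0 ((1 + \<tau>)/2)) {0..1}), restrict (\<lambda>t. (snd z t, restrict (\<lambda>s. Es z t s) {0..1})) {0..1}))"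
      using e0 A by (simp add: zx)
    show "snd ((fst z, restrict (\<lambda>\<tau>. Es z 0 ((1 + \<tau>)/2)) {0..1}), restrict (\<lambda>t. (snd z t, restrict (\<lambda>s. Es z t s) {0..1})) {0..1}) 1 =
     hofib_base y0 x0"
      using e1 A by (simp add: zx hofib_base_def)
  qed
qed


lemma hm_cont: "continuous_map (prod_topology unit_interval GG) GG hm"
  unfolding hm_def
proof (rule cm_into_hofib)
  have pG: "continuous_map (prod_topology unit_interval GG) GG snd" by (rule continuous_map_snd)
  show "continuous_map (prod_topology unit_interval GG) CC (\<lambda>w. fst ((fst (fst (snd w)), restrict (\<lambda>\<tau>. EE (fst w) (snd w) 0 ((1 + \<tau>)/2)) {0..1}),
   restrict (\<lambda>t. (fst (snd (snd w) t), restrict (\<lambda>s. EE (fst w) (snd w) t s) {0..1})) {0..1}))"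
    unfolding fst_conv
  proof (rule cm_into_hofib)
    show "continuous_map (prod_topology unit_interval GG) X (\<lambda>w. fst (fst (fst (snd w)), restrict (\<lambda>\<tau>. EE (fst w) (snd w) 0 ((1 + \<tau>)/2)) {0..1}))"
      unfolding fst_conv by (rule hf_fst_of[OF hf_fst_of[OF pG]])
    have F: "continuous_map (prod_topology (prod_topology unit_interval GG) unit_interval) X
        (\<lambda>v. EE (fst (fst v)) (snd (fst v)) 0 ((1 + snd v)/2))"
      by (intro cm_EE p_sf p_ff_r rci continuous_map_real_divide cm_snd_real; simp)
    show "continuous_map (prod_topology unit_interval GG) (compact_open unit_interval X)
        (\<lambda>w. snd (fst (fst (snd w)), restrict (\<lambda>\<tau>. EE (fst w) (snd w) 0 ((1 + \<tau>)/2)) {0..1}))"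
      unfolding snd_conv using continuous_map_curry[OF F, unfolded fst_conv snd_conv] .
    fix w assume w: "w \<in> topspace (prod_topology unit_interval GG)"
    obtain u x \<delta> \<Omega> where wx: "w = (u,((x,\<delta>),\<Omega>))" by (metis prod.exhaust)
    have u: "u \<in> {0..1}" and p: "((x,\<delta>),\<Omega>) \<in> topspace GG" using w by (auto simp: wx)
    note F = GG_facts[OF p]
    have "EE u ((x,\<delta>),\<Omega>) 0 (1/2) = snd (\<Omega> 0) (1/2)" using EE_K[OF u, where t=0 and s="1/2" and p="((x,\<delta>),\<Omega>)"] by simp
    then have "EE u ((x,\<delta>),\<Omega>) 0 (1/2) = x" using F(13)[of "1/2"] F(1) by (simp add: h0)
    moreover have "EE u ((x,\<delta>),\<Omega>) 0 1 = x0" using EE_K[OF u, where t=0 and s=1 and p="((x,\<delta>),\<Omega>)"] F(10)[of 0] by simp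
    ultimately show "snd (fst (fst (snd w)), restrict (\<lambda>\<tau>. EE (fst w) (snd w) 0 ((1 + \<tau>)/2)) {0..1}) 0 =
        fst (fst (fst (snd w)), restrict (\<lambda>\<tau>. EE (fst w) (snd w) 0 ((1 + \<tau>)/2)) {0..1}) \<and>
        snd (fst (fst (snd w)), restrict (\<lambda>\<tau>. EE (fst w) (snd w) 0 ((1 + \<tau>)/2)) {0..1}) 1 = x0"
      by (simp add: wx)
  qed
  have F: "continuous_map (prod_topology (prod_topology unit_interval GG) unit_interval) PP
     (\<lambda>v. (fst (snd (snd (fst v)) (snd v)), restrict (\<lambda>s. EE (fst (fst v)) (snd (fst v)) (snd v) s) {0..1}))"
  proof (rule cm_into_hofib)
    show "continuous_map (prod_topology (prod_topology unit_interval GG) unit_interval) Y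
       (\<lambda>v. fst (fst (snd (snd (fst v)) (snd v)), restrict (\<lambda>s. EE (fst (fst v)) (snd (fst v)) (snd v) s) {0..1}))"
      unfolding fst_conv by (rule hf_fst_of[OF continuous_map_eval_compose[OF p_ssf_h continuous_map_snd]])
    have F2: "continuous_map (prod_topology (prod_topology (prod_topology unit_interval GG) unit_interval) unit_interval) X
        (\<lambda>v. EE (fst (fst (fst v))) (snd (fst (fst v))) (snd (fst v)) (snd v))"
      by (intro cm_EE cm_snd[OF p_ff] cm_sub[OF cm_fst[OF p_ff]] p_sf_r cm_snd_real)
    show "continuous_map (prod_topology (prod_topology unit_interval GG) unit_interval) (compact_open unit_interval X)
       (\<lambda>v. snd (fst (snd (snd (fst v)) (snd v)), restrict (\<lambda>s. EE (fst (fst v)) (snd (fst v)) (snd v) s) {0..1}))"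
      unfolding snd_conv using continuous_map_curry[OF F2, unfolded fst_conv snd_conv] .
    fix v assume v: "v \<in> topspace (prod_topology (prod_topology unit_interval GG) unit_interval)"
    obtain u x \<delta> \<Omega> t where vx: "v = ((u,((x,\<delta>),\<Omega>)),t)" by (metis prod.exhaust)
    have u: "u \<in> {0..1}" and t: "t \<in> {0..1}" and p: "((x,\<delta>),\<Omega>) \<in> topspace GG" using v by (auto simp: vx)
    note F = GG_facts[OF p]
    show "snd (fst (snd (snd (fst v)) (snd v)), restrict (\<lambda>s. EE (fst (fst v)) (snd (fst v)) (snd v) s) {0..1}) 0 =
        l (fst (fst (snd (snd (fst v)) (snd v)), restrict (\<lambda>s. EE (fst (fst v)) (snd (fst v)) (snd v) s) {0..1})) \<and>
        snd (fst (snd (snd (fst v)) (snd v)), restrict (\<lambda>s. EE (fst (fst v)) (snd (fst v)) (snd v) s) {0..1}) 1 = x0"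
      using EE_K[OF u t, where s=0 and p="((x,\<delta>),\<Omega>)"] EE_K[OF u t, where s=1 and p="((x,\<delta>),\<Omega>)"] F(9)[OF t] F(10)[OF t]
      by (simp add: vx)
  qed
  show "continuous_map (prod_topology unit_interval GG) (compact_open unit_interval PP)
     (\<lambda>w. snd ((fst (fst (snd w)), restrict (\<lambda>\<tau>. EE (fst w) (snd w) 0 ((1 + \<tau>)/2)) {0..1}),
   restrict (\<lambda>t. (fst (snd (snd w) t), restrict (\<lambda>s. EE (fst w) (snd w) t s) {0..1})) {0..1}))"
    unfolding snd_conv using continuous_map_curry[OF F, unfolded fst_conv snd_conv] .
  fix w assume w: "w \<in> topspace (prod_topology unit_interval GG)"
  obtain u x \<delta> \<Omega> where wx: "w = (u,((x,\<delta>),\<Omega>))" by (metis prod.exhaust)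
  have u: "u \<in> {0..1}" and p: "((x,\<delta>),\<Omega>) \<in> topspace GG" using w by (auto simp: wx)
  note F = GG_facts[OF p]
  let ?p = "((x,\<delta>),\<Omega>)"
  have e0: "restrict (\<lambda>s. EE u ?p 0 s) {0..1} = snd (gg (x, restrict (\<lambda>\<tau>. EE u ?p 0 ((1 + \<tau>)/2)) {0..1}))"
    unfolding gg_def snd_conv fst_conv
  proof (rule restrict_ext)
    fix s :: real assume s: "s \<in> {0..1}"
    show "EE u ?p 0 s = (if s \<le> 1/2 then h (x, clamp (1 - 2 * s)) else restrict (\<lambda>\<tau>. EE u ?p 0 ((1 + \<tau>)/2)) {0..1} (clamp (2 * s - 1)))"
    proof (cases "s \<le> 1/2")
      case True
      then show ?thesis using EE_K[OF u, where t=0 and s=s and p="?p"] F(13)[of s] s by simp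
    next
      case False
      then have "2 * s - 1 \<in> {0..1}" "(1 + (2 * s - 1))/2 = s" using s by auto
      then show ?thesis using False by simp
    qed
  qed
  have e1: "restrict (\<lambda>s. EE u ?p 1 s) {0..1} = restrict (\<lambda>s. x0) {0..1}"
  proof (rule restrict_ext)
    fix s :: real assume "s \<in> {0..1}"
    then show "EE u ?p 1 s = x0" using EE_K[OF u, where t=1 and s=s and p="?p"] F(11)[of s] by simp
  qed
  have gg1: "gg (x, restrict (\<lambda>\<tau>. EE u ?p 0 ((1 + \<tau>)/2)) {0..1}) = (r x, snd (gg (x, restrict (\<lambda>\<tau>. EE u ?p 0 ((1 + \<tau>)/2)) {0..1})))"
    by (simp add: gg_def)
  show "snd ((fst (fst (snd w)), restrict (\<lambda>\<tau>. EE (fst w) (snd w) 0 ((1 + \<tau>)/2)) {0..1}),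
   restrict (\<lambda>t. (fst (snd (snd w) t), restrict (\<lambda>s. EE (fst w) (snd w) t s) {0..1})) {0..1}) 0 =
    gg (fst ((fst (fst (snd w)), restrict (\<lambda>\<tau>. EE (fst w) (snd w) 0 ((1 + \<tau>)/2)) {0..1}),
   restrict (\<lambda>t. (fst (snd (snd w) t), restrict (\<lambda>s. EE (fst w) (snd w) t s) {0..1})) {0..1})) \<and>
    snd ((fst (fst (snd w)), restrict (\<lambda>\<tau>. EE (fst w) (snd w) 0 ((1 + \<tau>)/2)) {0..1}),
   restrict (\<lambda>t. (fst (snd (snd w) t), restrict (\<lambda>s. EE (fst w) (snd w) t s) {0..1})) {0..1}) 1 = hofib_base y0 x0"
    using e0 e1 gg1 F(12,14) by (simp add: wx hofib_base_def)
qed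

lemma hm1: "p \<in> topspace GG \<Longrightarrow> hm (1, p) = p"
proof -
  assume p0: "p \<in> topspace GG"
  obtain x \<delta> \<Omega> where px: "p = ((x,\<delta>),\<Omega>)" by (metis prod.exhaust)
  note F = GG_facts[OF p0[unfolded px]]
  have a: "restrict (\<lambda>\<tau>. EE 1 p 0 ((1 + \<tau>)/2)) {0..1} = \<delta>"
  proof -
    have "restrict (\<lambda>\<tau>. EE 1 p 0 ((1 + \<tau>)/2)) {0..1} = restrict (\<lambda>\<tau>. \<delta> \<tau>) {0..1}"
    proof (rule restrict_ext)
      fix \<tau> :: real assume tau: "\<tau> \<in> {0..1}"
      then have "(1 + \<tau>)/2 \<in> {0..1}" by auto
      then show "EE 1 p 0 ((1 + \<tau>)/2) = \<delta> \<tau>" using EE1[of 0 "(1 + \<tau>)/2" p] F(15)[OF tau] by (simp add: px)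
    qed
    then show ?thesis using mapspace_ext'[OF F(2)] by simp
  qed
  have b: "restrict (\<lambda>t. (fst (snd p t), restrict (\<lambda>s. EE 1 p t s) {0..1})) {0..1} = \<Omega>"
  proof -
    have "restrict (\<lambda>t. (fst (snd p t), restrict (\<lambda>s. EE 1 p t s) {0..1})) {0..1} = restrict (\<lambda>t. \<Omega> t) {0..1}"
    proof (rule restrict_ext)
      fix t :: real assume t: "t \<in> {0..1}"
      have "restrict (\<lambda>s. EE 1 p t s) {0..1} = restrict (\<lambda>s. snd (\<Omega> t) s) {0..1}"
      proof (rule restrict_ext)
        fix s :: real assume "s \<in> {0..1}"
        then show "EE 1 p t s = snd (\<Omega> t) s" using EE1[OF t, of s p] by (simp add: px)
      qed
      also have "\<dots> = snd (\<Omega> t)" by (rule mapspace_ext'[OF F(8)[OF t]])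
      finally show "(fst (snd p t), restrict (\<lambda>s. EE 1 p t s) {0..1}) = \<Omega> t" by (simp add: px)
    qed
    then show ?thesis using mapspace_ext'[OF F(5)] by simp
  qed
  show "hm (1, p) = p" unfolding hm_def fst_conv snd_conv a b by (simp add: px)
qed

lemma hm0: "p \<in> topspace GG \<Longrightarrow> hm (0, p) = sig (prj p)"
proof -
  assume p0: "p \<in> topspace GG"
  obtain x \<delta> \<Omega> where px: "p = ((x,\<delta>),\<Omega>)" by (metis prod.exhaust)
  note F = GG_facts[OF p0[unfolded px]]
  have K: "EE 0 p t s = Es (prj p) t s" if "t \<in> {0..1}" "s \<in> {0..1}" for t s
    using EE0[OF that, of p] key[OF p0[unfolded px] that] by (simp add: px)
  have a: "restrict (\<lambda>\<tau>. EE 0 p 0 ((1 + \<tau>)/2)) {0..1} = restrict (\<lambda>\<tau>. Es (prj p) 0 ((1 + \<tau>)/2)) {0..1}"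
    by (rule restrict_ext) (rule K, auto)
  have b: "restrict (\<lambda>t. (fst (snd p t), restrict (\<lambda>s. EE 0 p t s) {0..1})) {0..1} =
      restrict (\<lambda>t. (snd (prj p) t, restrict (\<lambda>s. Es (prj p) t s) {0..1})) {0..1}"
  proof (rule restrict_ext)
    fix t :: real assume t: "t \<in> {0..1}"
    have "restrict (\<lambda>s. EE 0 p t s) {0..1} = restrict (\<lambda>s. Es (prj p) t s) {0..1}"
      by (rule restrict_ext) (rule K[OF t])
    then show "(fst (snd p t), restrict (\<lambda>s. EE 0 p t s) {0..1}) = (snd (prj p) t, restrict (\<lambda>s. Es (prj p) t s) {0..1})"
      using t by (simp add: prj_def)
  qed
  show "hm (0, p) = sig (prj p)" unfolding hm_def sig_def fst_conv snd_conv a b by (simp add: prj_def)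
qed

lemma prj_sig: "z \<in> topspace RR \<Longrightarrow> prj (sig z) = z"
proof -
  assume z: "z \<in> topspace RR"
  obtain x y where zx: "z = (x,y)" by (cases z)
  have A: "y \<in> mapspace unit_interval Y" using z by (auto simp: zx topspace_hofib)
  have "restrict (\<lambda>t. fst (snd (sig z) t)) {0..1} = restrict (\<lambda>t. y t) {0..1}"
    by (rule restrict_ext) (simp add: sig_def zx)
  also have "\<dots> = y" by (rule mapspace_ext'[OF A])
  finally show ?thesis by (simp add: prj_def sig_def zx)
qed

lemma part2: "RR homotopy_equivalent_space GG"
  unfolding homotopy_equivalent_space_def
proof (intro exI conjI)
  show "continuous_map RR GG sig" by (rule sig_cont)
  show "continuous_map GG RR prj" by (rule prj_cont)
  show "homotopic_with (\<lambda>x. True) RR RR (prj \<circ> sig) id"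
    by (rule homotopic_with_equal) (auto intro: continuous_map_compose sig_cont prj_cont simp: prj_sig)
  show "homotopic_with (\<lambda>x. True) GG GG (sig \<circ> prj) id"
  proof (subst homotopic_with, simp, intro exI conjI ballI)
    show "continuous_map (prod_topology unit_interval GG) GG hm" by (rule hm_cont)
    fix p assume "p \<in> topspace GG"
    then show "hm (0, p) = (sig \<circ> prj) p" "hm (1, p) = id p" by (simp_all add: hm0 hm1)
  qed simp
qed

lemma main_ctx: "RR homotopy_equivalent_space loopspace PP (hofib_base y0 x0)"
  by (rule homotopy_eqv_trans[OF part2 part1])

end

theorem mainTheorem13:
  fixes X :: "'a topology" and Y :: "'b topology"
    and x0 :: 'a and y0 :: 'b
    and r :: "'a \<Rightarrow> 'b" and l :: "'b \<Rightarrow> 'a"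
    and h :: "'a \<times> real \<Rightarrow> 'a"
  assumes "x0 \<in> topspace X" and "y0 \<in> topspace Y"
    and "continuous_map X Y r" and "r x0 = y0"
    and "continuous_map Y X l" and "l y0 = x0"
    and "continuous_map (prod_topology X unit_interval) X h"
    and "\<And>x. x \<in> topspace X \<Longrightarrow> h (x, 0) = x"
    and "\<And>x. x \<in> topspace X \<Longrightarrow> h (x, 1) = l (r x)"
    and "\<And>t. t \<in> {0..1} \<Longrightarrow> h (x0, t) = x0"
  shows "hofib X Y y0 r homotopy_equivalent_space
           loopspace (hofib Y X x0 l) (hofib_base y0 x0)"
  by (rule main_ctx[OF assms])

end
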